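(* Let $P\in\mathbb{P}^2$ be a point at which the conic $C_2$ is smooth. Then: \begin{enumerate} \item If $P\in (C_2\cap L)\setminus L_\infty$, then $(D,P)$ is of type $a_{3\iota_1-1}$. \item If $P\in (C_2\cap L_\infty)\setminus L$, then $D$ is smooth at $P$ and tangent to $L_\infty$ at $P$ with $I(D,L_\infty;P)=2\iota_2$. \item If $P\in C_2\cap L\cap L_\infty$, then $(D,P)$ is of type $a_{3\iota_1+\iota_2-1}$. \end{enumerate}
   Context: Work in $\mathbb{P}^2$ with homogeneous coordinates $[X:Y:Z]$, $L_\infty=\{Z=0\}$. Let $F_1'$ and $F_2'$ be homogeneous polynomials of degrees $1$ and $2$, let $L=\{F_1'=0\}$ be a line with $L\neq L_\infty$, and $C_2=\{F_2'=0\}$ a conic having neither $L$ nor $L_\infty$ as a component. Let $D=\{G=0\}$ be the quartic with $G=F_2'^2+F_1'^3Z$. For a point $P$ set $\iota_1=I(C_2,L;P)$ and $\iota_2=I(C_2,L_\infty;P)$ (local intersection multiplicities). For $n\ge1$, "$(D,P)$ is of type $a_n$" means the germ of $D$ at $P$ is topologically equivalent to the germ $x^2+y^{n+1}=0$ at the origin. *)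

theory Defs
  imports "HOL-Analysis.Analysis"
begin

text \<open>Points of P^2 over the complex numbers are represented by nonzero triples
  (homogeneous coordinates [X:Y:Z]); a plane curve is represented by a homogeneous
  polynomial function F X Y Z.  A line is given by its coefficient triple (a,b,c),
  i.e. the line aX+bY+cZ = 0; the line at infinity is (0,0,1).\<close>

type_synonym pt = "complex \<times> complex \<times> complex"
type_synonym hpoly = "complex \<Rightarrow> complex \<Rightarrow> complex \<Rightarrow> complex"

definition ev :: "hpoly \<Rightarrow> pt \<Rightarrow> complex" where
  "ev F p = (case p of (x, y, z) \<Rightarrow> F x y z)"

definition on_line :: "pt \<Rightarrow> pt \<Rightarrow> bool" where
  "on_line l p = (case l of (a, b, c) \<Rightarrow> (case p of (x, y, z) \<Rightarrow> a*x + b*y + c*z = 0))"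

definition proportional :: "pt \<Rightarrow> pt \<Rightarrow> bool" where
  "proportional p q = (\<exists>t. case p of (x, y, z) \<Rightarrow> q = (t*x, t*y, t*z))"

definition vanish_order :: "(complex \<Rightarrow> complex) \<Rightarrow> nat" where
  "vanish_order f = (LEAST k. (deriv ^^ k) f 0 \<noteq> 0)"

definition imult :: "hpoly \<Rightarrow> pt \<Rightarrow> pt \<Rightarrow> nat" where
  "imult F l P =
    (if \<not> on_line l P then 0
     else (let Q = (SOME Q. on_line l Q \<and> \<not> proportional P Q) in
           (case P of (p1, p2, p3) \<Rightarrow> (case Q of (q1, q2, q3) \<Rightarrow>
             vanish_order (\<lambda>s. F (p1 + s*q1) (p2 + s*q2) (p3 + s*q3))))))"

definition dX :: "hpoly \<Rightarrow> pt \<Rightarrow> complex" where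
  "dX F p = (case p of (x, y, z) \<Rightarrow> deriv (\<lambda>t. F t y z) x)"
definition dY :: "hpoly \<Rightarrow> pt \<Rightarrow> complex" where
  "dY F p = (case p of (x, y, z) \<Rightarrow> deriv (\<lambda>t. F x t z) y)"
definition dZ :: "hpoly \<Rightarrow> pt \<Rightarrow> complex" where
  "dZ F p = (case p of (x, y, z) \<Rightarrow> deriv (\<lambda>t. F x y t) z)"

definition smooth_at :: "hpoly \<Rightarrow> pt \<Rightarrow> bool" where
  "smooth_at F p = (ev F p = 0 \<and> (dX F p \<noteq> 0 \<or> dY F p \<noteq> 0 \<or> dZ F p \<noteq> 0))"

definition germ_equiv ::
  "(complex \<times> complex) set \<Rightarrow> complex \<times> complex \<Rightarrow> (complex \<times> complex) set \<Rightarrow> complex \<times> complex \<Rightarrow> bool" where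
  "germ_equiv A a B b =
    (\<exists>U V h k. open U \<and> open V \<and> a \<in> U \<and> b \<in> V \<and> homeomorphism U V h k \<and>
       h a = b \<and> h ` (A \<inter> U) = B \<inter> V)"

definition a_germ :: "nat \<Rightarrow> (complex \<times> complex) set" where
  "a_germ n = {(x, y). x^2 + y^(n+1) = 0}"

definition type_a :: "hpoly \<Rightarrow> nat \<Rightarrow> pt \<Rightarrow> bool" where
  "type_a F n P = (n \<ge> 1 \<and> (case P of (x0, y0, z0) \<Rightarrow>
      (z0 \<noteq> 0 \<and> germ_equiv {(x, y). F x y 1 = 0} (x0/z0, y0/z0) (a_germ n) (0, 0)) \<or>
      (x0 \<noteq> 0 \<and> germ_equiv {(y, z). F 1 y z = 0} (y0/x0, z0/x0) (a_germ n) (0, 0)) \<or>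
      (y0 \<noteq> 0 \<and> germ_equiv {(x, z). F x 1 z = 0} (x0/y0, z0/y0) (a_germ n) (0, 0))))"

end

theory Submission
  imports Defs "HOL-Computational_Algebra.Polynomial"
begin

lemma germ_equivI:
  fixes f :: "complex\<times>complex \<Rightarrow> complex\<times>complex"
  assumes "open U" "a \<in> U" "continuous_on U f" "inj_on f U" "f a = b"
    and mem: "\<And>x. x \<in> U \<Longrightarrow> (x \<in> A \<longleftrightarrow> f x \<in> B)"
  shows "germ_equiv A a B b"
proof -
  obtain g where hom: "homeomorphism U (f ` U) f g"
    using invariance_of_domain_homeomorphism[OF assms(1,3) _ assms(4)] by auto
  have op: "open (f ` U)" using invariance_of_domain[OF assms(3,1,4)] .
  have "f ` (A \<inter> U) = B \<inter> f ` U"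
  proof
    show "f ` (A \<inter> U) \<subseteq> B \<inter> f ` U" using mem by auto
    show "B \<inter> f ` U \<subseteq> f ` (A \<inter> U)" using mem by auto
  qed
  then show ?thesis unfolding germ_equiv_def
    using assms op hom by blast
qed

lemma germ_equivD:
  assumes "germ_equiv A a B b"
  obtains U f where "open U" "a \<in> U" "continuous_on U f" "inj_on f U" "f a = b"
    "\<And>x. x \<in> U \<Longrightarrow> (x \<in> A \<longleftrightarrow> f x \<in> B)"
proof -
  obtain U V h k where UV: "open U" "open V" "a \<in> U" "b \<in> V" "homeomorphism U V h k"
    "h a = b" "h ` (A \<inter> U) = B \<inter> V"
    using assms unfolding germ_equiv_def by blast
  have inj: "inj_on h U" using UV(5) unfolding homeomorphism_def by (metis inj_on_inverseI)
  have cont: "continuous_on U h" using UV(5) unfolding homeomorphism_def by auto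
  have hU: "h ` U = V" using UV(5) unfolding homeomorphism_def by auto
  have "x \<in> A \<longleftrightarrow> h x \<in> B" if "x \<in> U" for x
  proof
    assume "x \<in> A" then show "h x \<in> B" using UV(7) that by blast
  next
    assume "h x \<in> B"
    then have "h x \<in> h ` (A \<inter> U)" using UV(7) hU that by blast
    then obtain y where "y \<in> A \<inter> U" "h y = h x" by auto
    then show "x \<in> A" using inj that by (metis IntD1 IntD2 inj_onD)
  qed
  then show ?thesis using that UV inj cont by blast
qed

lemma germ_trans:
  assumes "germ_equiv A a B b" "germ_equiv B b C c"
  shows "germ_equiv A a C c"
proof -
  obtain U1 f1 where 1: "open U1" "a \<in> U1" "continuous_on U1 f1" "inj_on f1 U1" "f1 a = b"
    "\<And>x. x \<in> U1 \<Longrightarrow> (x \<in> A \<longleftrightarrow> f1 x \<in> B)" using germ_equivD[OF assms(1)] by metis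
  obtain U2 f2 where 2: "open U2" "b \<in> U2" "continuous_on U2 f2" "inj_on f2 U2" "f2 b = c"
    "\<And>x. x \<in> U2 \<Longrightarrow> (x \<in> B \<longleftrightarrow> f2 x \<in> C)" using germ_equivD[OF assms(2)] by metis
  define U where "U = U1 \<inter> f1 -` U2"
  have oU: "open U" unfolding U_def using 1(1,3) 2(1) continuous_open_preimage by blast
  show ?thesis
  proof (rule germ_equivI[of U _ "f2 \<circ> f1"])
    show "continuous_on U (f2 \<circ> f1)"
      by (rule continuous_on_compose) (use 1(3) 2(3) in \<open>auto simp: U_def intro: continuous_on_subset\<close>)
    show "inj_on (f2 \<circ> f1) U" using 1(4) 2(4) unfolding U_def inj_on_def by auto
  qed (use oU 1 2 in \<open>auto simp: U_def\<close>)
qed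

lemma onorm_mat2:
  fixes m11 m12 m21 m22 :: complex
  shows "onorm (\<lambda>v::complex\<times>complex. (m11 * fst v + m12 * snd v, m21 * fst v + m22 * snd v))
     \<le> cmod m11 + cmod m12 + cmod m21 + cmod m22"
proof (rule onorm_le)
  fix v :: "complex\<times>complex"
  have f: "cmod (fst v) \<le> norm v" "cmod (snd v) \<le> norm v"
    using norm_fst_le[of "fst v" "snd v"] norm_snd_le[of "snd v" "fst v"] by auto
  have "norm (m11 * fst v + m12 * snd v, m21 * fst v + m22 * snd v)
      \<le> cmod (m11 * fst v + m12 * snd v) + cmod (m21 * fst v + m22 * snd v)" by (rule norm_Pair_le)
  also have "\<dots> \<le> (cmod m11 * cmod (fst v) + cmod m12 * cmod (snd v)) + (cmod m21 * cmod (fst v) + cmod m22 * cmod (snd v))"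
    by (intro add_mono order_trans[OF norm_triangle_ineq]) (auto simp: norm_mult)
  also have "\<dots> \<le> (cmod m11 * norm v + cmod m12 * norm v) + (cmod m21 * norm v + cmod m22 * norm v)"
    by (intro add_mono mult_left_mono f) auto
  finally show "norm (m11 * fst v + m12 * snd v, m21 * fst v + m22 * snd v) \<le> (cmod m11 + cmod m12 + cmod m21 + cmod m22) * norm v"
    by (simp add: algebra_simps)
qed

lemma loc_inj:
  fixes f :: "complex\<times>complex \<Rightarrow> complex\<times>complex" and J11 J12 J21 J22 :: "complex\<times>complex \<Rightarrow> complex"
  assumes S: "open S" "a \<in> S"
    and der: "\<And>p. p \<in> S \<Longrightarrow> (f has_derivative (\<lambda>h. (J11 p * fst h + J12 p * snd h, J21 p * fst h + J22 p * snd h))) (at p)"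
    and c11: "continuous_on S J11" and c12: "continuous_on S J12"
    and c21: "continuous_on S J21" and c22: "continuous_on S J22"
    and det: "J11 a * J22 a - J12 a * J21 a \<noteq> 0"
  obtains r where "r > 0" "ball a r \<subseteq> S" "inj_on f (ball a r)"
proof -
  define d where "d = J11 a * J22 a - J12 a * J21 a"
  define g' where "g' = (\<lambda>w::complex\<times>complex. ((J22 a * fst w - J12 a * snd w) / d, (J11 a * snd w - J21 a * fst w) / d))"
  have bl: "bounded_linear g'" unfolding g'_def
    unfolding divide_inverse
    by (intro bounded_linear_Pair bounded_linear_mult_left bounded_linear_sub bounded_linear_mult_right bounded_linear_fst bounded_linear_snd
        bounded_linear_compose[OF bounded_linear_mult_left] bounded_linear_compose[OF bounded_linear_mult_right])
  have inv: "g' \<circ> (\<lambda>h. (J11 a * fst h + J12 a * snd h, J21 a * fst h + J22 a * snd h)) = id"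
    using det unfolding g'_def d_def by (auto simp: fun_eq_iff field_simps)
  have ic: "isCont J a" if "continuous_on S J" for J
    using that S continuous_on_eq_continuous_at by blast
  have cl: "\<exists>d>0. \<forall>x. dist a x < d \<longrightarrow> onorm (\<lambda>v. (J11 x * fst v + J12 x * snd v, J21 x * fst v + J22 x * snd v) -
          (J11 a * fst v + J12 a * snd v, J21 a * fst v + J22 a * snd v)) < e" if "e > 0" for e
  proof -
    have e4: "e/5 > 0" using that by auto
    have ev: "\<forall>\<^sub>F x in at a. cmod (J x - J a) < e/5" if "continuous_on S J" for J
    proof -
      have "(J \<longlongrightarrow> J a) (at a)" using ic[OF that] isCont_def by blast
      then have "\<forall>\<^sub>F x in at a. dist (J x) (J a) < e/5" using tendstoD e4 by blast
      then show ?thesis by (simp add: dist_norm)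
    qed
    have "\<forall>\<^sub>F x in at a. cmod (J11 x - J11 a) < e/5 \<and> cmod (J12 x - J12 a) < e/5 \<and> cmod (J21 x - J21 a) < e/5 \<and> cmod (J22 x - J22 a) < e/5"
      using ev[OF c11] ev[OF c12] ev[OF c21] ev[OF c22] by eventually_elim auto
    then obtain dd where dd: "dd > 0" "\<And>x. x \<noteq> a \<Longrightarrow> dist x a < dd \<Longrightarrow>
       cmod (J11 x - J11 a) < e/5 \<and> cmod (J12 x - J12 a) < e/5 \<and> cmod (J21 x - J21 a) < e/5 \<and> cmod (J22 x - J22 a) < e/5"
      unfolding eventually_at by blast
    show ?thesis
    proof (intro exI[of _ dd] conjI allI impI)
      fix x assume "dist a x < dd"
      have eq: "(\<lambda>v::complex\<times>complex. (J11 x * fst v + J12 x * snd v, J21 x * fst v + J22 x * snd v) -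
          (J11 a * fst v + J12 a * snd v, J21 a * fst v + J22 a * snd v)) =
          (\<lambda>v. ((J11 x - J11 a) * fst v + (J12 x - J12 a) * snd v, (J21 x - J21 a) * fst v + (J22 x - J22 a) * snd v))"
        by (auto simp: fun_eq_iff algebra_simps)
      show "onorm (\<lambda>v. (J11 x * fst v + J12 x * snd v, J21 x * fst v + J22 x * snd v) -
          (J11 a * fst v + J12 a * snd v, J21 a * fst v + J22 a * snd v)) < e"
      proof (cases "x = a")
        case True
        then show ?thesis using that by (simp add: onorm_zero)
      next
        case False
        then have "cmod (J11 x - J11 a) < e/5 \<and> cmod (J12 x - J12 a) < e/5 \<and> cmod (J21 x - J21 a) < e/5 \<and> cmod (J22 x - J22 a) < e/5"
          using dd \<open>dist a x < dd\<close> by (simp add: dist_commute)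
        then show ?thesis unfolding eq using onorm_mat2[of "J11 x - J11 a" "J12 x - J12 a" "J21 x - J21 a" "J22 x - J22 a"] that
          by linarith
      qed
    qed (use dd in auto)
  qed
  obtain r where "r > 0" "ball a r \<subseteq> S" "inj_on f (ball a r)"
    by (rule has_derivative_locally_injective[OF S(2) S(1) bl inv der]) (use cl in auto)
  then show ?thesis using that by blast
qed

definition D2 :: "(complex\<times>complex \<Rightarrow> complex) \<Rightarrow> (complex\<times>complex \<Rightarrow> complex) \<Rightarrow> (complex\<times>complex \<Rightarrow> complex) \<Rightarrow> bool" where
  "D2 f fs ft \<longleftrightarrow> (\<forall>p. (f has_derivative (\<lambda>h. fs p * fst h + ft p * snd h)) (at p)) \<and> continuous_on UNIV fs \<and> continuous_on UNIV ft"

lemma D2_cont: "D2 f fs ft \<Longrightarrow> continuous_on S f"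
  unfolding D2_def by (meson continuous_at_imp_continuous_on has_derivative_continuous)

lemma NF:
  fixes Gl X0 Y0 W E :: "complex\<times>complex \<Rightarrow> complex" and n :: nat
  assumes iden: "\<And>p. E p * Gl p = (X0 p)^2 + W p * (Y0 p)^(n+1)"
    and Econt: "continuous_on UNIV E" and E0: "E (0,0) \<noteq> 0"
    and DW: "D2 W Ws Wt" and W0: "W (0,0) \<noteq> 0"
    and DX: "D2 X0 Xs Xt" and X00: "X0 (0,0) = 0"
    and DY: "D2 Y0 Ys Yt" and Y00: "Y0 (0,0) = 0"
    and det: "Xs (0,0) * Yt (0,0) - Xt (0,0) * Ys (0,0) \<noteq> 0"
  shows "germ_equiv {p. Gl p = 0} (0,0) (a_germ n) (0,0)"
proof -
  define w0 where "w0 = W (0,0)"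
  define c where "c = csqrt w0"
  have c0: "c \<noteq> 0" using W0 by (simp add: c_def w0_def)
  have cc: "c^2 = w0" by (simp add: c_def)
  define u where "u p = W p / w0" for p
  define sg where "sg p = inverse (c * csqrt (u p))" for p
  define S where "S = {p. u p \<in> ball 1 1} \<inter> {p. E p \<noteq> 0}"
  have Wc: "continuous_on UNIV W" using D2_cont[OF DW] .
  have uc: "continuous_on UNIV u" unfolding u_def using W0 by (intro continuous_intros Wc) (auto simp: w0_def)
  have o1: "open (u -` ball 1 1)" using continuous_open_preimage[OF uc open_UNIV, of "ball 1 1"] by simp
  have o2: "open (E -` (-{0}))" using continuous_open_preimage[OF Econt open_UNIV, of "-{0}"] by auto
  have "S = (u -` ball 1 1) \<inter> (E -` (-{0}))" unfolding S_def by auto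
  then have oS: "open S" using o1 o2 by auto
  have S0: "(0,0) \<in> S" unfolding S_def u_def w0_def using W0 E0 by auto
  have uS: "u p \<notin> \<real>\<^sub>\<le>\<^sub>0" "u p \<noteq> 0" if "p \<in> S" for p
  proof -
    have "cmod (1 - u p) < 1" using that unfolding S_def by (auto simp: dist_norm)
    then have "Re (u p) > 0"
      using abs_Re_le_cmod[of "1 - u p"] by auto
    then show "u p \<notin> \<real>\<^sub>\<le>\<^sub>0" "u p \<noteq> 0" by (auto simp: complex_nonpos_Reals_iff)
  qed
  have WS: "W p \<noteq> 0" if "p \<in> S" for p using uS(2)[OF that] by (simp add: u_def)
  define f where "f p = (X0 p * sg p, Y0 p)" for p
  define sgs where "sgs p = - (Ws p / w0) / (2 * csqrt (u p)) * c / (c * csqrt (u p))^2" for p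
  define sgt where "sgt p = - (Wt p / w0) / (2 * csqrt (u p)) * c / (c * csqrt (u p))^2" for p
  have dsg: "(sg has_derivative (\<lambda>h. sgs p * fst h + sgt p * snd h)) (at p)" if "p \<in> S" for p
  proof -
    have dW: "(W has_derivative (\<lambda>h. Ws p * fst h + Wt p * snd h)) (at p)" using DW unfolding D2_def by blast
    have du: "(u has_derivative (\<lambda>h. (Ws p * fst h + Wt p * snd h) / w0)) (at p)"
      using has_derivative_mult_left[OF dW, of "inverse w0"] unfolding u_def by (simp add: divide_inverse)
    have dcs: "(csqrt has_derivative (\<lambda>h. h * inverse (2 * csqrt (u p)))) (at (u p))"
      using has_field_derivative_csqrt[OF uS(1)[OF that]] unfolding has_field_derivative_def
      by (rule has_derivative_eq_rhs) (simp add: fun_eq_iff)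
    have dr: "((\<lambda>p. csqrt (u p)) has_derivative (\<lambda>h. (Ws p * fst h + Wt p * snd h) / w0 * inverse (2 * csqrt (u p)))) (at p)"
      using has_derivative_compose[OF du dcs] by simp
    have nz: "c * csqrt (u p) \<noteq> 0" using c0 uS(2)[OF that] by simp
    have "((\<lambda>p. inverse (c * csqrt (u p))) has_derivative
        (\<lambda>h. - (inverse (c * csqrt (u p)) * (c * ((Ws p * fst h + Wt p * snd h) / w0 * inverse (2 * csqrt (u p)))) * inverse (c * csqrt (u p))))) (at p)"
      by (rule Deriv.has_derivative_inverse[OF nz has_derivative_mult_right[OF dr]])
    then show ?thesis unfolding sg_def
      apply (rule has_derivative_eq_rhs)
      using nz W0 by (auto simp: fun_eq_iff sgs_def sgt_def field_simps power2_eq_square w0_def)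
  qed
  have sgc: "continuous_on S sg" unfolding sg_def
    apply (intro continuous_intros continuous_on_compose2[OF continuous_on_csqrt] continuous_on_subset[OF uc])
    using uS c0 by auto
  have sgsc: "continuous_on S sgs" "continuous_on S sgt" unfolding sgs_def sgt_def
    using DW uS c0 W0 unfolding D2_def w0_def
    by (auto intro!: continuous_intros continuous_on_compose2[OF continuous_on_csqrt] continuous_on_subset[OF uc]
       intro: continuous_on_subset)
  have X0c: "continuous_on S X0" using D2_cont[OF DX] .
  have derf: "(f has_derivative (\<lambda>h. ((Xs p * sg p + X0 p * sgs p) * fst h + (Xt p * sg p + X0 p * sgt p) * snd h,
       Ys p * fst h + Yt p * snd h))) (at p)" if "p \<in> S" for p
  proof -
    have dX: "(X0 has_derivative (\<lambda>h. Xs p * fst h + Xt p * snd h)) (at p)" using DX unfolding D2_def by blast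
    have dY: "(Y0 has_derivative (\<lambda>h. Ys p * fst h + Yt p * snd h)) (at p)" using DY unfolding D2_def by blast
    show ?thesis unfolding f_def
      apply (rule has_derivative_eq_rhs)
       apply (rule has_derivative_Pair[OF has_derivative_mult[OF dX dsg[OF that]] dY])
      by (auto simp: fun_eq_iff algebra_simps)
  qed
  have sg0: "sg (0,0) \<noteq> 0" unfolding sg_def using c0 uS(2)[OF S0] by simp
  obtain r where r: "r > 0" "ball (0,0) r \<subseteq> S" "inj_on f (ball (0,0) r)"
  proof (rule loc_inj[OF oS S0 derf])
    show "continuous_on S (\<lambda>p. Xs p * sg p + X0 p * sgs p)" "continuous_on S (\<lambda>p. Xt p * sg p + X0 p * sgt p)"
      using DX sgc sgsc X0c unfolding D2_def by (auto intro!: continuous_intros intro: continuous_on_subset)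
    show "continuous_on S Ys" "continuous_on S Yt" using DY unfolding D2_def by (auto intro: continuous_on_subset)
    show "(Xs (0, 0) * sg (0, 0) + X0 (0, 0) * sgs (0, 0)) * Yt (0, 0) -
      (Xt (0, 0) * sg (0, 0) + X0 (0, 0) * sgt (0, 0)) * Ys (0, 0) \<noteq> 0"
      using X00 det sg0 by (simp add: algebra_simps)
  qed auto
  show ?thesis
  proof (rule germ_equivI[OF _ _ _ r(3)])
    show "continuous_on (ball (0, 0) r) f" unfolding f_def
      using sgc X0c D2_cont[OF DY] r(2) by (auto intro!: continuous_intros intro: continuous_on_subset)
    show "f (0,0) = (0,0)" using X00 Y00 by (simp add: f_def)
    fix p :: "complex\<times>complex" assume "p \<in> ball (0,0) r"
    then have pS: "p \<in> S" using r(2) by auto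
    have cs2: "(csqrt (u p))^2 = u p" by simp
    have "(X0 p * sg p)^2 = X0 p ^2 / W p"
      unfolding sg_def using cs2 cc c0 uS(2)[OF pS]
      by (simp add: u_def field_simps power_mult_distrib power_inverse)
    then have "(X0 p * sg p)^2 + (Y0 p)^(n+1) = E p * Gl p / W p"
      using iden[of p] WS[OF pS] by (simp add: field_simps)
    moreover have "E p \<noteq> 0" using pS S_def by auto
    ultimately show "p \<in> {p. Gl p = 0} \<longleftrightarrow> f p \<in> a_germ n"
      using WS[OF pS] by (auto simp: f_def a_germ_def)
  qed (use r in auto)
qed

definition isD2 :: "(complex\<times>complex \<Rightarrow> complex) \<Rightarrow> bool" where
  "isD2 f \<longleftrightarrow> (\<exists>fs ft. D2 f fs ft)"

lemma isD2_const: "isD2 (\<lambda>p. c)"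
  unfolding isD2_def D2_def by (rule exI[of _ "\<lambda>p. 0"], rule exI[of _ "\<lambda>p. 0"]) auto

lemma isD2_fst: "isD2 fst"
  unfolding isD2_def D2_def
  by (rule exI[of _ "\<lambda>p. 1"], rule exI[of _ "\<lambda>p. 0"]) (auto intro: has_derivative_eq_rhs[OF has_derivative_fst[OF has_derivative_ident]])

lemma isD2_snd: "isD2 snd"
  unfolding isD2_def D2_def
  by (rule exI[of _ "\<lambda>p. 0"], rule exI[of _ "\<lambda>p. 1"]) (auto intro: has_derivative_eq_rhs[OF has_derivative_snd[OF has_derivative_ident]])

lemma isD2_add: "isD2 f \<Longrightarrow> isD2 g \<Longrightarrow> isD2 (\<lambda>p. f p + g p)"
proof -
  assume "isD2 f" "isD2 g"
  then obtain fs ft gs gt where F: "D2 f fs ft" and G: "D2 g gs gt" unfolding isD2_def by blast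
  show ?thesis unfolding isD2_def
  proof (intro exI)
    show "D2 (\<lambda>p. f p + g p) (\<lambda>p. fs p + gs p) (\<lambda>p. ft p + gt p)"
      unfolding D2_def
    proof (intro conjI allI)
      fix p
      have "(f has_derivative (\<lambda>h. fs p * fst h + ft p * snd h)) (at p)"
           "(g has_derivative (\<lambda>h. gs p * fst h + gt p * snd h)) (at p)" using F G unfolding D2_def by blast+
      from has_derivative_add[OF this]
      show "((\<lambda>p. f p + g p) has_derivative (\<lambda>h. (fs p + gs p) * fst h + (ft p + gt p) * snd h)) (at p)"
        by (rule has_derivative_eq_rhs) (auto simp: fun_eq_iff algebra_simps)
    qed (use F G in \<open>auto simp: D2_def intro!: continuous_intros\<close>)
  qed
qed

lemma isD2_mult: "isD2 f \<Longrightarrow> isD2 g \<Longrightarrow> isD2 (\<lambda>p. f p * g p)"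
proof -
  assume "isD2 f" "isD2 g"
  then obtain fs ft gs gt where F: "D2 f fs ft" and G: "D2 g gs gt" unfolding isD2_def by blast
  have cf: "continuous_on UNIV f" "continuous_on UNIV g" using D2_cont F G by blast+
  show ?thesis unfolding isD2_def
  proof (intro exI)
    show "D2 (\<lambda>p. f p * g p) (\<lambda>p. fs p * g p + f p * gs p) (\<lambda>p. ft p * g p + f p * gt p)"
      unfolding D2_def
    proof (intro conjI allI)
      fix p
      have "(f has_derivative (\<lambda>h. fs p * fst h + ft p * snd h)) (at p)"
           "(g has_derivative (\<lambda>h. gs p * fst h + gt p * snd h)) (at p)" using F G unfolding D2_def by blast+
      from has_derivative_mult[OF this]
      show "((\<lambda>p. f p * g p) has_derivative (\<lambda>h. (fs p * g p + f p * gs p) * fst h + (ft p * g p + f p * gt p) * snd h)) (at p)"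
        by (rule has_derivative_eq_rhs) (auto simp: fun_eq_iff algebra_simps)
    qed (use F G cf in \<open>auto simp: D2_def intro!: continuous_intros\<close>)
  qed
qed

lemma isD2_minus: "isD2 f \<Longrightarrow> isD2 (\<lambda>p. - f p)"
  using isD2_mult[OF isD2_const[of "-1"]] by simp

lemma isD2_diff: "isD2 f \<Longrightarrow> isD2 g \<Longrightarrow> isD2 (\<lambda>p. f p - g p)"
  using isD2_add[OF _ isD2_minus] by simp

lemma isD2_pow: "isD2 f \<Longrightarrow> isD2 (\<lambda>p. f p ^ n)"
  by (induction n) (auto intro: isD2_const isD2_mult)

lemmas isD2_intros = isD2_add isD2_diff isD2_mult isD2_minus isD2_pow isD2_fst isD2_snd isD2_const

lemma NF2:
  fixes Gl XX YY W E :: "complex\<times>complex \<Rightarrow> complex" and n :: nat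
  assumes iden: "\<And>p. E p * Gl p = (XX p)^2 + W p * (YY p)^(n+1)"
    and Econt: "continuous_on UNIV E" and E0: "E (0,0) \<noteq> 0"
    and DW: "isD2 W" and W0: "W (0,0) \<noteq> 0"
    and DX: "isD2 XX" and XX0: "XX (0,0) = 0"
    and DY: "isD2 YY" and Y0: "YY (0,0) = 0"
    and dX: "(XX has_derivative (\<lambda>h. xa * fst h + xb * snd h)) (at (0,0))"
    and dY: "(YY has_derivative (\<lambda>h. ya * fst h + yb * snd h)) (at (0,0))"
    and det: "xa * yb - xb * ya \<noteq> 0"
  shows "germ_equiv {p. Gl p = 0} (0,0) (a_germ n) (0,0)"
proof -
  obtain Ws Wt where W: "D2 W Ws Wt" using DW isD2_def by blast
  obtain Xs Xt where X: "D2 XX Xs Xt" using DX isD2_def by blast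
  obtain Ys Yt where Y: "D2 YY Ys Yt" using DY isD2_def by blast
  have "(\<lambda>h. Xs (0,0) * fst h + Xt (0,0) * snd h) = (\<lambda>h. xa * fst h + xb * snd h)"
    using X dX unfolding D2_def by (meson has_derivative_unique)
  from fun_cong[OF this, of "(1,0)"] fun_cong[OF this, of "(0,1)"]
  have xx: "Xs (0,0) = xa" "Xt (0,0) = xb" by auto
  have "(\<lambda>h. Ys (0,0) * fst h + Yt (0,0) * snd h) = (\<lambda>h. ya * fst h + yb * snd h)"
    using Y dY unfolding D2_def by (meson has_derivative_unique)
  from fun_cong[OF this, of "(1,0)"] fun_cong[OF this, of "(0,1)"]
  have yy: "Ys (0,0) = ya" "Yt (0,0) = yb" by auto
  show ?thesis by (rule NF[OF iden Econt E0 W W0 X XX0 Y Y0]) (use xx yy det in auto)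
qed

lemma case1a:
  fixes al ga ep be de ka z0 z1 z2 :: complex and Gl :: "complex\<times>complex \<Rightarrow> complex"
  assumes Gl: "\<And>p. Gl p = (al*fst p^2 + ga*fst p* snd p + ep* snd p^2 + be*fst p + de* snd p)^2 + ka* snd p^3*(z0 + z1*fst p + z2* snd p)"
    and nz: "be \<noteq> 0" "ka \<noteq> 0" "z0 \<noteq> 0"
  shows "germ_equiv {p. Gl p = 0} (0,0) (a_germ 2) (0,0)"
proof (rule NF2[where E = "\<lambda>p. (z0 + z1*fst p + z2* snd p)^2" and W = "\<lambda>p. ka"
     and XX = "\<lambda>p. (z0 + z1*fst p + z2* snd p) * (al*fst p^2 + ga*fst p* snd p + ep* snd p^2 + be*fst p + de* snd p)"
     and YY = "\<lambda>p. (z0 + z1*fst p + z2* snd p) * snd p"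
     and xa = "z0*be" and xb = "z0*de" and ya = 0 and yb = z0])
  show "\<And>p. (z0 + z1*fst p + z2* snd p)^2 * Gl p = ((z0 + z1*fst p + z2* snd p) * (al*fst p^2 + ga*fst p* snd p + ep* snd p^2 + be*fst p + de* snd p))^2 + ka * ((z0 + z1*fst p + z2* snd p) * snd p)^(2+1)"
    by (simp add: Gl power2_eq_square power3_eq_cube algebra_simps)
  show "((\<lambda>p. (z0 + z1*fst p + z2* snd p) * (al*fst p^2 + ga*fst p* snd p + ep* snd p^2 + be*fst p + de* snd p)) has_derivative (\<lambda>h. z0*be * fst h + z0*de * snd h)) (at (0,0))"
    by (auto intro!: derivative_eq_intros simp: fun_eq_iff algebra_simps)
  show "((\<lambda>p. (z0 + z1*fst p + z2* snd p) * snd p) has_derivative (\<lambda>h. 0 * fst h + z0 * snd h)) (at (0,0))"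
    by (auto intro!: derivative_eq_intros simp: fun_eq_iff algebra_simps)
qed (use nz in \<open>auto intro!: isD2_intros continuous_intros\<close>)

lemma id1b:
  fixes q s t m u k a :: complex
  assumes "m*t = q - a* s^2"
  shows "4*(m^3 + k*u*q - 3*k*u*a* s^2)*m^3*(q^2 + k*u*t^3) =
   (2*(m^3 + k*u*q - 3*k*u*a* s^2)*q + 3*k*u*a^2* s^4)^2 + (-((3*k*u*a^2)^2* s^2 + 4*(m^3 + k*u*q - 3*k*u*a* s^2)*k*u*a^3))* s^6"
  using assms by algebra

lemma id3a:
  fixes q s t m n k :: complex
  assumes "q = s*m + t*n"
  shows "4*m^2*(q^2 + k* s*t^3) = (2*m*q + k*t^3)^2 + (-(k^2*t^2 + 4*m*k*n))*t^4"
  using assms by algebra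

lemma id3b:
  fixes q s t m e k :: complex
  assumes "q = s*m + e*t^2"
  shows "4*m^2*(q^2 + k* s*t^3) = (2*m*q + k*t^3)^2 + (-(k^2*t + 4*m*k*e))*t^5"
  using assms by algebra

lemma id3c:
  fixes q s t m k a :: complex
  assumes "m*t = q - a* s^2"
  shows "4*(m^3 + k* s*q - 3*k*a* s^3)*m^3*(q^2 + k* s*t^3) =
   (2*(m^3 + k* s*q - 3*k*a* s^3)*q + 3*k*a^2* s^5)^2 + (-((3*k*a^2)^2* s^3 + 4*(m^3 + k* s*q - 3*k*a* s^3)*k*a^3))* s^7"
  using assms by algebra

lemma case1b:
  fixes al ga ep be de ka z0 z1 z2 :: complex and Gl :: "complex\<times>complex \<Rightarrow> complex"
  assumes Gl: "\<And>p. Gl p = (al*fst p^2 + ga*fst p * snd p + ep* snd p^2 + be*fst p + de* snd p)^2 + ka* snd p^3*(z0 + z1*fst p + z2* snd p)"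
    and nz: "be = 0" "al \<noteq> 0" "de \<noteq> 0" "ka \<noteq> 0" "z0 \<noteq> 0"
  shows "germ_equiv {p. Gl p = 0} (0,0) (a_germ 5) (0,0)"
proof -
  define q where "q p = al*fst p^2 + ga*fst p * snd p + ep* snd p^2 + de* snd p" for p
  define m where "m p = de + ga*fst p + ep* snd p" for p
  define u where "u p = z0 + z1*fst p + z2* snd p" for p
  define U where "U p = m p^3 + ka*u p*q p - 3*ka*u p*al*fst p^2" for p
  have Gq: "Gl p = q p^2 + ka*u p* snd p^3" for p using nz(1) by (simp add: Gl q_def u_def algebra_simps)
  have mt: "m p * snd p = q p - al*fst p^2" for p by (simp add: m_def q_def algebra_simps power2_eq_square)
  show ?thesis
  proof (rule NF2[where E = "\<lambda>p. 4*U p*m p^3" and W = "\<lambda>p. -((3*ka*u p*al^2)^2*fst p^2 + 4*U p*ka*u p*al^3)"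
     and XX = "\<lambda>p. 2*U p*q p + 3*ka*u p*al^2*fst p^4" and YY = "fst"
     and xa = 0 and xb = "2*de^3*de" and ya = 1 and yb = 0])
    show "4*U p*m p^3 * Gl p = (2*U p*q p + 3*ka*u p*al^2*fst p^4)^2 + -((3*ka*u p*al^2)^2*fst p^2 + 4*U p*ka*u p*al^3) * fst p^(5+1)" for p
      using id1b[OF mt[of p], of ka "u p"] unfolding Gq U_def by (simp add: mult.assoc)
    show "((\<lambda>p. 2*U p*q p + 3*ka*u p*al^2*fst p^4) has_derivative (\<lambda>h. 0 * fst h + 2*de^3*de * snd h)) (at (0,0))"
      unfolding U_def q_def m_def u_def
      by (auto intro!: derivative_eq_intros simp: fun_eq_iff algebra_simps)
    show "((fst::complex\<times>complex\<Rightarrow>complex) has_derivative (\<lambda>h. 1 * fst h + 0 * snd h)) (at (0,0))"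
      by (auto intro!: derivative_eq_intros simp: fun_eq_iff)
    show "continuous_on UNIV (\<lambda>p. 4*U p*m p^3)" unfolding U_def q_def m_def u_def by (intro continuous_intros)
    show "isD2 (\<lambda>p. -((3*ka*u p*al^2)^2*fst p^2 + 4*U p*ka*u p*al^3))" unfolding U_def q_def m_def u_def by (intro isD2_intros)
    show "isD2 (\<lambda>p. 2*U p*q p + 3*ka*u p*al^2*fst p^4)" unfolding U_def q_def m_def u_def by (intro isD2_intros)
  qed (use nz in \<open>auto intro!: isD2_intros simp: U_def q_def m_def u_def\<close>)
qed

lemma case3a:
  fixes al ga ep be de ka :: complex and Gl :: "complex\<times>complex \<Rightarrow> complex"
  assumes Gl: "\<And>p. Gl p = (al*fst p^2 + ga*fst p * snd p + ep* snd p^2 + be*fst p + de* snd p)^2 + ka*fst p * snd p^3"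
    and nz: "be \<noteq> 0" "de \<noteq> 0" "ka \<noteq> 0"
  shows "germ_equiv {p. Gl p = 0} (0,0) (a_germ 3) (0,0)"
proof -
  define q where "q p = al*fst p^2 + ga*fst p * snd p + ep* snd p^2 + be*fst p + de* snd p" for p
  define m where "m p = be + al*fst p + ga* snd p" for p
  define n where "n (p::complex\<times>complex) = de + ep * snd p" for p
  have Gq: "Gl p = q p^2 + ka*fst p * snd p^3" for p by (simp add: Gl q_def)
  have qq: "q p = fst p * m p + snd p * n p" for p by (simp add: m_def n_def q_def algebra_simps power2_eq_square)
  show ?thesis
  proof (rule NF2[where E = "\<lambda>p. 4*m p^2" and W = "\<lambda>p. -(ka^2* snd p^2 + 4*m p*ka*n p)"
     and XX = "\<lambda>p. 2*m p*q p + ka* snd p^3" and YY = "snd"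
     and xa = "2*be*be" and xb = "2*be*de" and ya = 0 and yb = 1])
    show "4*m p^2 * Gl p = (2*m p*q p + ka* snd p^3)^2 + -(ka^2* snd p^2 + 4*m p*ka*n p) * snd p^(3+1)" for p
      using id3a[OF qq[of p], of ka] unfolding Gq by (simp add: mult.assoc)
    show "((\<lambda>p. 2*m p*q p + ka* snd p^3) has_derivative (\<lambda>h. 2*be*be * fst h + 2*be*de * snd h)) (at (0,0))"
      unfolding q_def m_def n_def
      by (auto intro!: derivative_eq_intros simp: fun_eq_iff algebra_simps)
    show "((snd::complex\<times>complex\<Rightarrow>complex) has_derivative (\<lambda>h. 0 * fst h + 1 * snd h)) (at (0,0))"
      by (auto intro!: derivative_eq_intros simp: fun_eq_iff)
    show "continuous_on UNIV (\<lambda>p. 4*m p^2)" unfolding q_def m_def n_def by (intro continuous_intros)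
    show "isD2 (\<lambda>p. -(ka^2* snd p^2 + 4*m p*ka*n p))" unfolding q_def m_def n_def by (intro isD2_intros)
    show "isD2 (\<lambda>p. 2*m p*q p + ka* snd p^3)" unfolding q_def m_def n_def by (intro isD2_intros)
  qed (use nz in \<open>auto intro!: isD2_intros simp: q_def m_def n_def\<close>)
qed

lemma case3b:
  fixes al ga ep be de ka :: complex and Gl :: "complex\<times>complex \<Rightarrow> complex"
  assumes Gl: "\<And>p. Gl p = (al*fst p^2 + ga*fst p * snd p + ep* snd p^2 + be*fst p + de* snd p)^2 + ka*fst p * snd p^3"
    and nz: "de = 0" "be \<noteq> 0" "ep \<noteq> 0" "ka \<noteq> 0"
  shows "germ_equiv {p. Gl p = 0} (0,0) (a_germ 4) (0,0)"
proof -
  define q where "q p = al*fst p^2 + ga*fst p * snd p + ep* snd p^2 + be*fst p" for p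
  define m where "m p = be + al*fst p + ga* snd p" for p
  have Gq: "Gl p = q p^2 + ka*fst p * snd p^3" for p using nz(1) by (simp add: Gl q_def)
  have qq: "q p = fst p * m p + ep * snd p^2" for p by (simp add: m_def q_def algebra_simps power2_eq_square)
  show ?thesis
  proof (rule NF2[where E = "\<lambda>p. 4*m p^2" and W = "\<lambda>p. -(ka^2* snd p + 4*m p*ka*ep)"
     and XX = "\<lambda>p. 2*m p*q p + ka* snd p^3" and YY = "snd"
     and xa = "2*be*be" and xb = "0" and ya = 0 and yb = 1])
    show "4*m p^2 * Gl p = (2*m p*q p + ka* snd p^3)^2 + -(ka^2* snd p + 4*m p*ka*ep) * snd p^(4+1)" for p
      using id3b[OF qq[of p], of ka] unfolding Gq by (simp add: mult.assoc)
    show "((\<lambda>p. 2*m p*q p + ka* snd p^3) has_derivative (\<lambda>h. 2*be*be * fst h + 0 * snd h)) (at (0,0))"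
      unfolding q_def m_def
      by (auto intro!: derivative_eq_intros simp: fun_eq_iff algebra_simps)
    show "((snd::complex\<times>complex\<Rightarrow>complex) has_derivative (\<lambda>h. 0 * fst h + 1 * snd h)) (at (0,0))"
      by (auto intro!: derivative_eq_intros simp: fun_eq_iff)
    show "continuous_on UNIV (\<lambda>p. 4*m p^2)" unfolding q_def m_def by (intro continuous_intros)
    show "isD2 (\<lambda>p. -(ka^2* snd p + 4*m p*ka*ep))" unfolding q_def m_def by (intro isD2_intros)
    show "isD2 (\<lambda>p. 2*m p*q p + ka* snd p^3)" unfolding q_def m_def by (intro isD2_intros)
  qed (use nz in \<open>auto intro!: isD2_intros simp: q_def m_def\<close>)
qed

lemma case3c:
  fixes al ga ep be de ka :: complex and Gl :: "complex\<times>complex \<Rightarrow> complex"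
  assumes Gl: "\<And>p. Gl p = (al*fst p^2 + ga*fst p * snd p + ep* snd p^2 + be*fst p + de* snd p)^2 + ka*fst p * snd p^3"
    and nz: "be = 0" "al \<noteq> 0" "de \<noteq> 0" "ka \<noteq> 0"
  shows "germ_equiv {p. Gl p = 0} (0,0) (a_germ 6) (0,0)"
proof -
  define q where "q p = al*fst p^2 + ga*fst p * snd p + ep* snd p^2 + de* snd p" for p
  define m where "m p = de + ga*fst p + ep* snd p" for p
  define U where "U p = m p^3 + ka*fst p*q p - 3*ka*al*fst p^3" for p
  have Gq: "Gl p = q p^2 + ka*fst p* snd p^3" for p using nz(1) by (simp add: Gl q_def)
  have mt: "m p * snd p = q p - al*fst p^2" for p by (simp add: m_def q_def algebra_simps power2_eq_square)
  show ?thesis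
  proof (rule NF2[where E = "\<lambda>p. 4*U p*m p^3" and W = "\<lambda>p. -((3*ka*al^2)^2*fst p^3 + 4*U p*ka*al^3)"
     and XX = "\<lambda>p. 2*U p*q p + 3*ka*al^2*fst p^5" and YY = "fst"
     and xa = 0 and xb = "2*de^3*de" and ya = 1 and yb = 0])
    show "4*U p*m p^3 * Gl p = (2*U p*q p + 3*ka*al^2*fst p^5)^2 + -((3*ka*al^2)^2*fst p^3 + 4*U p*ka*al^3) * fst p^(6+1)" for p
      using id3c[OF mt[of p], of ka] unfolding Gq U_def by (simp add: mult.assoc)
    show "((\<lambda>p. 2*U p*q p + 3*ka*al^2*fst p^5) has_derivative (\<lambda>h. 0 * fst h + 2*de^3*de * snd h)) (at (0,0))"
      unfolding U_def q_def m_def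
      by (auto intro!: derivative_eq_intros simp: fun_eq_iff algebra_simps)
    show "((fst::complex\<times>complex\<Rightarrow>complex) has_derivative (\<lambda>h. 1 * fst h + 0 * snd h)) (at (0,0))"
      by (auto intro!: derivative_eq_intros simp: fun_eq_iff)
    show "continuous_on UNIV (\<lambda>p. 4*U p*m p^3)" unfolding U_def q_def m_def by (intro continuous_intros)
    show "isD2 (\<lambda>p. -((3*ka*al^2)^2*fst p^3 + 4*U p*ka*al^3))" unfolding U_def q_def m_def by (intro isD2_intros)
    show "isD2 (\<lambda>p. 2*U p*q p + 3*ka*al^2*fst p^5)" unfolding U_def q_def m_def by (intro isD2_intros)
  qed (use nz in \<open>auto intro!: isD2_intros simp: U_def q_def m_def\<close>)
qed

definition det3 :: "pt \<Rightarrow> pt \<Rightarrow> pt \<Rightarrow> complex" where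
  "det3 X Y Z = (case X of (x1,x2,x3) \<Rightarrow> case Y of (y1,y2,y3) \<Rightarrow> case Z of (z1,z2,z3) \<Rightarrow>
     x1*(y2*z3 - y3*z2) - x2*(y1*z3 - y3*z1) + x3*(y1*z2 - y2*z1))"

lemma cramer0:
  fixes pa pb pc qa qb qc ra rb rc xa xb xc :: complex
  shows "det3 (pa,pb,pc) (qa,qb,qc) (ra,rb,rc) * xa = det3 (xa,xb,xc) (qa,qb,qc) (ra,rb,rc)*pa + det3 (pa,pb,pc) (xa,xb,xc) (ra,rb,rc)*qa + det3 (pa,pb,pc) (qa,qb,qc) (xa,xb,xc)*ra"
    "det3 (pa,pb,pc) (qa,qb,qc) (ra,rb,rc) * xb = det3 (xa,xb,xc) (qa,qb,qc) (ra,rb,rc)*pb + det3 (pa,pb,pc) (xa,xb,xc) (ra,rb,rc)*qb + det3 (pa,pb,pc) (qa,qb,qc) (xa,xb,xc)*rb"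
    "det3 (pa,pb,pc) (qa,qb,qc) (ra,rb,rc) * xc = det3 (xa,xb,xc) (qa,qb,qc) (ra,rb,rc)*pc + det3 (pa,pb,pc) (xa,xb,xc) (ra,rb,rc)*qc + det3 (pa,pb,pc) (qa,qb,qc) (xa,xb,xc)*rc"
  unfolding det3_def by (simp_all add: algebra_simps)

definition comb :: "pt \<Rightarrow> pt \<Rightarrow> pt \<Rightarrow> complex \<Rightarrow> complex \<Rightarrow> pt" where
  "comb P Q R s t = (case P of (p1,p2,p3) \<Rightarrow> case Q of (q1,q2,q3) \<Rightarrow> case R of (r1,r2,r3) \<Rightarrow>
     (p1 + s*q1 + t*r1, p2 + s*q2 + t*r2, p3 + s*q3 + t*r3))"

lemma cr1:
  fixes D m1 m2 m3 x p q r :: complex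
  assumes "D \<noteq> 0" "m1 \<noteq> 0" "D * x = m1*p + m2*q + m3*r"
  shows "x = (m1/D) * (p + (m2/m1)*q + (m3/m1)*r)"
proof -
  have "(m1/D) * (p + (m2/m1)*q + (m3/m1)*r) = (m1/D) * ((m1*p + m2*q + m3*r)/m1)"
    using assms(2) by (simp add: field_simps)
  also have "\<dots> = (m1/D) * ((D*x)/m1)" using assms(3) by simp
  also have "\<dots> = x" using assms(1,2) by simp
  finally show ?thesis by simp
qed

lemma cramer:
  fixes P Q R X :: pt
  assumes "det3 P Q R \<noteq> 0" "det3 X Q R \<noteq> 0"
  shows "X = (let k = det3 X Q R / det3 P Q R; C = comb P Q R (det3 P X R / det3 X Q R) (det3 P Q X / det3 X Q R)
             in (k * fst C, k * fst (snd C), k * snd (snd C)))"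
proof -
  obtain p1 p2 p3 where P: "P = (p1,p2,p3)" by (cases P) auto
  obtain q1 q2 q3 where Q: "Q = (q1,q2,q3)" by (cases Q) auto
  obtain r1 r2 r3 where R: "R = (r1,r2,r3)" by (cases R) auto
  obtain x1 x2 x3 where X: "X = (x1,x2,x3)" by (cases X) auto
  define D where "D = det3 (p1,p2,p3) (q1,q2,q3) (r1,r2,r3)"
  define m1 where "m1 = det3 (x1,x2,x3) (q1,q2,q3) (r1,r2,r3)"
  define m2 where "m2 = det3 (p1,p2,p3) (x1,x2,x3) (r1,r2,r3)"
  define m3 where "m3 = det3 (p1,p2,p3) (q1,q2,q3) (x1,x2,x3)"
  note c = cramer0[where pa=p1 and pb=p2 and pc=p3 and qa=q1 and qb=q2 and qc=q3 and ra=r1 and rb=r2 and rc=r3 and xa=x1 and xb=x2 and xc=x3, folded D_def m1_def m2_def m3_def]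
  have n: "D \<noteq> 0" "m1 \<noteq> 0" using assms unfolding P Q R X D_def m1_def by auto
  have e: "x1 = (m1/D) * (p1 + (m2/m1)*q1 + (m3/m1)*r1)" "x2 = (m1/D) * (p2 + (m2/m1)*q2 + (m3/m1)*r2)"
     "x3 = (m1/D) * (p3 + (m2/m1)*q3 + (m3/m1)*r3)"
    using cr1[OF n c(1)] cr1[OF n c(2)] cr1[OF n c(3)] by auto
  show ?thesis unfolding P Q R X Let_def comb_def
    apply (simp only: D_def[symmetric] m1_def[symmetric] m2_def[symmetric] m3_def[symmetric] prod.case fst_conv snd_conv)
    apply (simp only: prod.inject)
    using e by (simp add: algebra_simps)
qed

lemma chart:
  fixes G :: hpoly and ch :: "complex\<times>complex \<Rightarrow> pt" and lam :: "pt \<Rightarrow> complex"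
  assumes hom: "\<And>k x y z. G (k*x) (k*y) (k*z) = k^4 * G x y z"
    and D: "det3 P Q R \<noteq> 0"
    and lamlin: "\<And>k x y z. lam (k*x, k*y, k*z) = k * lam (x,y,z)"
    and lam1: "\<And>u. lam (ch u) = 1"
    and chinj: "inj ch" and chc: "continuous_on UNIV ch"
    and lP: "lam P \<noteq> 0" and u0: "ch u0 = (fst P / lam P, fst (snd P) / lam P, snd (snd P) / lam P)"
    and g: "germ_equiv {p. ev G (comb P Q R (fst p) (snd p)) = 0} (0,0) (a_germ n) (0,0)"
  shows "germ_equiv {u. ev G (ch u) = 0} u0 (a_germ n) (0,0)"
proof -
  define mu1 where "mu1 X = det3 X Q R" for X
  define phi where "phi u = (det3 P (ch u) R / mu1 (ch u), det3 P Q (ch u) / mu1 (ch u))" for u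
  define U where "U = {u. mu1 (ch u) \<noteq> 0}"
  have chc': "continuous_on UNIV (\<lambda>u. fst (ch u))" "continuous_on UNIV (\<lambda>u. fst (snd (ch u)))"
     "continuous_on UNIV (\<lambda>u. snd (snd (ch u)))"
    using chc by (auto intro!: continuous_intros)
  have dc: "continuous_on UNIV (\<lambda>u. det3 (ch u) Q R)" "continuous_on UNIV (\<lambda>u. det3 P (ch u) R)"
     "continuous_on UNIV (\<lambda>u. det3 P Q (ch u))"
    using chc' unfolding det3_def
    by (auto simp: case_prod_beta intro!: continuous_intros)
  have oU: "open U"
  proof -
    have "open ((\<lambda>u. det3 (ch u) Q R) -` (-{0}))"
      using continuous_open_preimage[OF dc(1) open_UNIV, of "-{0}"] by auto
    then show ?thesis unfolding U_def mu1_def by (simp add: vimage_def)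
  qed
  have dP: "det3 (ch u0) Q R = det3 P Q R / lam P"
    using u0 lP by (cases P, cases Q, cases R) (simp add: det3_def field_simps)
  have u0U: "u0 \<in> U" unfolding U_def mu1_def using dP D lP by simp
  have phi0: "phi u0 = (0,0)" unfolding phi_def using u0 by (cases P, cases Q, cases R) (simp add: det3_def field_simps)
  have key: "ch u = (let k = mu1 (ch u) / det3 P Q R; C = comb P Q R (fst (phi u)) (snd (phi u))
             in (k * fst C, k * fst (snd C), k * snd (snd C)))" if "u \<in> U" for u
    using cramer[OF D, of "ch u"] that unfolding U_def mu1_def phi_def by simp
  have gp: "germ_equiv {u. ev G (ch u) = 0} u0 {p. ev G (comb P Q R (fst p) (snd p)) = 0} (0,0)"
  proof (rule germ_equivI[where f=phi, OF oU u0U _ _ phi0])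
    show "continuous_on U phi" unfolding phi_def U_def mu1_def
      by (intro continuous_intros continuous_on_subset[OF dc(1)] continuous_on_subset[OF dc(2)] continuous_on_subset[OF dc(3)]) auto
    show "inj_on phi U"
    proof (rule inj_onI)
      fix u v assume uv: "u \<in> U" "v \<in> U" "phi u = phi v"
      define C where "C = comb P Q R (fst (phi u)) (snd (phi u))"
      define k where "k = mu1 (ch u) / det3 P Q R"
      define k' where "k' = mu1 (ch v) / det3 P Q R"
      have cu: "ch u = (k * fst C, k * fst (snd C), k * snd (snd C))" using key[OF uv(1)] unfolding C_def k_def by (simp add: Let_def)
      have cv: "ch v = (k' * fst C, k' * fst (snd C), k' * snd (snd C))" using key[OF uv(2)] uv(3) unfolding C_def k'_def by (simp add: Let_def)
      have "k * lam (fst C, fst (snd C), snd (snd C)) = 1" using lam1[of u] cu lamlin by metis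
      moreover have "k' * lam (fst C, fst (snd C), snd (snd C)) = 1" using lam1[of v] cv lamlin by metis
      ultimately have "k = k'" by (metis mult_cancel_right mult_zero_left zero_neq_one)
      then have "ch u = ch v" using cu cv by simp
      then show "u = v" using chinj by (simp add: inj_eq)
    qed
    fix u assume "u \<in> U"
    define C where "C = comb P Q R (fst (phi u)) (snd (phi u))"
    define k where "k = mu1 (ch u) / det3 P Q R"
    have k0: "k \<noteq> 0" using \<open>u \<in> U\<close> D unfolding k_def U_def by simp
    have cu: "ch u = (k * fst C, k * fst (snd C), k * snd (snd C))" using key[OF \<open>u \<in> U\<close>] unfolding C_def k_def by (simp add: Let_def)
    have "ev G (ch u) = k^4 * ev G C" unfolding cu by (cases C) (simp add: ev_def hom)
    then show "u \<in> {u. ev G (ch u) = 0} \<longleftrightarrow> phi u \<in> {p. ev G (comb P Q R (fst p) (snd p)) = 0}"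
      using k0 unfolding C_def by simp
  qed
  show ?thesis by (rule germ_trans[OF gp g])
qed

lemma deriv_poly_fun: "deriv (poly q) = poly (pderiv q)"
  by (rule ext, rule DERIV_imp_deriv, rule poly_DERIV)

lemma deriv_iter_poly: "(deriv ^^ k) (poly p) = poly ((pderiv ^^ k) p)"
  by (induction k) (auto simp: deriv_poly_fun)

lemma coeff_pderiv_iter0: "coeff ((pderiv ^^ k) p) 0 = of_nat (fact k) * coeff p k"
proof (induction k arbitrary: p)
  case 0 then show ?case by simp
next
  case (Suc k)
  have "(pderiv ^^ Suc k) p = (pderiv ^^ k) (pderiv p)" by (simp add: funpow_Suc_right del: funpow.simps)
  then show ?case using Suc[of "pderiv p"] by (simp add: coeff_pderiv algebra_simps)
qed

lemma vanish_order_poly: "vanish_order (poly (p :: complex poly)) = (LEAST k. coeff p k \<noteq> 0)"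
proof -
  have "(deriv ^^ k) (poly p) 0 \<noteq> 0 \<longleftrightarrow> coeff p k \<noteq> 0" for k
    by (simp add: deriv_iter_poly poly_0_coeff_0 coeff_pderiv_iter0)
  then show ?thesis unfolding vanish_order_def by simp
qed

lemma VO_quad:
  fixes al be :: complex
  assumes "al \<noteq> 0 \<or> be \<noteq> 0"
  shows "vanish_order (\<lambda>s. al* s^2 + be* s) = (if be \<noteq> 0 then 1 else 2)"
proof -
  have "(\<lambda>s. al* s^2 + be* s) = poly [:0, be, al:]" by (auto simp: fun_eq_iff algebra_simps power2_eq_square)
  then have "vanish_order (\<lambda>s. al* s^2 + be* s) = (LEAST k. coeff [:0, be, al:] k \<noteq> 0)"
    by (simp add: vanish_order_poly)
  also have "\<dots> = (if be \<noteq> 0 then 1 else 2)"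
  proof (cases "be \<noteq> 0")
    case True
    then show ?thesis by (intro Least_equality) (auto simp: less_Suc_eq_0_disj coeff_pCons split: nat.splits)
  next
    case False
    then have "al \<noteq> 0" using assms by auto
    then show ?thesis using False
      by (intro Least_equality) (auto simp: coeff_pCons split: nat.splits)
  qed
  finally show ?thesis .
qed

lemma VO_quad_sq:
  fixes al be :: complex
  assumes "al \<noteq> 0 \<or> be \<noteq> 0"
  shows "vanish_order (\<lambda>s. (al* s^2 + be* s)^2) = (if be \<noteq> 0 then 2 else 4)"
proof -
  have "(\<lambda>s. (al* s^2 + be* s)^2) = poly [:0, 0, be^2, 2*al*be, al^2:]"
    by (auto simp: fun_eq_iff algebra_simps power2_eq_square)
  then have "vanish_order (\<lambda>s. (al* s^2 + be* s)^2) = (LEAST k. coeff [:0, 0, be^2, 2*al*be, al^2:] k \<noteq> 0)"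
    by (simp add: vanish_order_poly)
  also have "\<dots> = (if be \<noteq> 0 then 2 else 4)"
  proof (cases "be \<noteq> 0")
    case True
    then show ?thesis by (intro Least_equality) (auto simp: coeff_pCons split: nat.splits)
  next
    case False
    then have "al \<noteq> 0" using assms by auto
    then show ?thesis using False
      by (intro Least_equality) (auto simp: coeff_pCons split: nat.splits)
  qed
  finally show ?thesis .
qed

definition B2 :: "hpoly \<Rightarrow> pt \<Rightarrow> pt \<Rightarrow> complex" where
  "B2 F P Q = (case P of (p1,p2,p3) \<Rightarrow> case Q of (q1,q2,q3) \<Rightarrow> F (p1+q1) (p2+q2) (p3+q3) - F p1 p2 p3 - F q1 q2 q3)"

lemma prop_of_cross:
  fixes p1 p2 p3 q1 q2 q3 :: complex
  assumes "(p1,p2,p3) \<noteq> (0,0,0)" "p2*q3 - p3*q2 = 0" "p3*q1 - p1*q3 = 0" "p1*q2 - p2*q1 = 0"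
  shows "proportional (p1,p2,p3) (q1,q2,q3)"
proof -
  consider "p1 \<noteq> 0" | "p2 \<noteq> 0" | "p3 \<noteq> 0" using assms(1) by auto
  then show ?thesis
  proof cases
    case 1 then show ?thesis using assms unfolding proportional_def
      by (intro exI[of _ "q1/p1"]) (auto simp: field_simps algebra_simps)
  next
    case 2 then show ?thesis using assms unfolding proportional_def
      by (intro exI[of _ "q2/p2"]) (auto simp: field_simps algebra_simps)
  next
    case 3 then show ?thesis using assms unfolding proportional_def
      by (intro exI[of _ "q3/p3"]) (auto simp: field_simps algebra_simps)
  qed
qed

lemma basis_zero:
  fixes g1 g2 g3 p1 p2 p3 q1 q2 q3 r1 r2 r3 :: complex
  assumes "det3 (p1,p2,p3) (q1,q2,q3) (r1,r2,r3) \<noteq> 0"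
    "g1*p1 + g2*p2 + g3*p3 = 0" "g1*q1 + g2*q2 + g3*q3 = 0" "g1*r1 + g2*r2 + g3*r3 = 0"
  shows "g1 = 0 \<and> g2 = 0 \<and> g3 = 0"
proof -
  define D where "D = det3 (p1,p2,p3) (q1,q2,q3) (r1,r2,r3)"
  have "D * g1 = 0" "D * g2 = 0" "D * g3 = 0"
    using assms(2-4) unfolding D_def det3_def by (simp_all, algebra+)
  then show ?thesis using assms(1) unfolding D_def by simp
qed

lemma quad_comb:
  fixes F :: hpoly
  assumes F: "\<And>x y z. F x y z = c1*x^2 + c2*y^2 + c3*z^2 + c4*x*y + c5*x*z + c6*y*z"
  shows "F (p1 + s*q1 + t*r1) (p2 + s*q2 + t*r2) (p3 + s*q3 + t*r3) =
     F q1 q2 q3 * s^2 + B2 F (q1,q2,q3) (r1,r2,r3) * s * t + F r1 r2 r3 * t^2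
     + B2 F (p1,p2,p3) (q1,q2,q3) * s + B2 F (p1,p2,p3) (r1,r2,r3) * t + F p1 p2 p3"
  unfolding B2_def F by simp algebra

lemma quad_line:
  fixes F :: hpoly
  assumes F: "\<And>x y z. F x y z = c1*x^2 + c2*y^2 + c3*z^2 + c4*x*y + c5*x*z + c6*y*z"
  shows "F (p1 + s*q1) (p2 + s*q2) (p3 + s*q3) =
     F q1 q2 q3 * s^2 + B2 F (p1,p2,p3) (q1,q2,q3) * s + F p1 p2 p3"
  unfolding B2_def F by simp algebra

lemma factor:
  fixes F :: hpoly
  assumes F: "\<And>x y z. F x y z = c1*x^2 + c2*y^2 + c3*z^2 + c4*x*y + c5*x*z + c6*y*z"
    and D: "det3 (p1,p2,p3) (q1,q2,q3) (r1,r2,r3) \<noteq> 0"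
    and lP: "l1*p1 + l2*p2 + l3*p3 = 0" and lQ: "l1*q1 + l2*q2 + l3*q3 = 0"
    and lR: "l1*r1 + l2*r2 + l3*r3 \<noteq> 0"
    and FP: "F p1 p2 p3 = 0" and FQ: "F q1 q2 q3 = 0" and BPQ: "B2 F (p1,p2,p3) (q1,q2,q3) = 0"
  shows "\<exists>d e f. \<forall>x y z. F x y z = (l1*x + l2*y + l3*z) * (d*x + e*y + f*z)"
proof -
  define D where "D = det3 (p1,p2,p3) (q1,q2,q3) (r1,r2,r3)"
  define lr where "lr = l1*r1 + l2*r2 + l3*r3"
  define FR where "FR = F r1 r2 r3"
  define BPR where "BPR = B2 F (p1,p2,p3) (r1,r2,r3)"
  define BQR where "BQR = B2 F (q1,q2,q3) (r1,r2,r3)"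
  define M where "M X = (FR * det3 (p1,p2,p3) (q1,q2,q3) X + BPR * det3 X (q1,q2,q3) (r1,r2,r3)
     + BQR * det3 (p1,p2,p3) X (r1,r2,r3)) / (D * lr)" for X
  have Mlin: "M (x,y,z) = M (1,0,0) * x + M (0,1,0) * y + M (0,0,1) * z" for x y z
    unfolding M_def det3_def by (simp add: field_simps) algebra
  have main: "F x y z = (l1*x + l2*y + l3*z) * M (x,y,z)" for x y z
  proof -
    define m1 where "m1 = det3 (x,y,z) (q1,q2,q3) (r1,r2,r3)"
    define m2 where "m2 = det3 (p1,p2,p3) (x,y,z) (r1,r2,r3)"
    define m3 where "m3 = det3 (p1,p2,p3) (q1,q2,q3) (x,y,z)"
    note c = cramer0[where pa=p1 and pb=p2 and pc=p3 and qa=q1 and qb=q2 and qc=q3 and ra=r1 and rb=r2 and rc=r3 and xa=x and xb=y and xc=z,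
       folded D_def m1_def m2_def m3_def]
    have h1: "F (D*x) (D*y) (D*z) = D^2 * F x y z" unfolding F by (simp add: algebra_simps power2_eq_square)
    have h2: "F (m1*p1 + m2*q1 + m3*r1) (m2*q2 + m1*p2 + m3*r2) (m1*p3 + m2*q3 + m3*r3)
       = m1^2 * F p1 p2 p3 + m2^2 * F q1 q2 q3 + m3^2 * FR + m1*m2*B2 F (p1,p2,p3) (q1,q2,q3)
         + m1*m3*BPR + m2*m3*BQR"
      unfolding FR_def BPR_def BQR_def B2_def F by simp algebra
    have "D^2 * F x y z = m3 * (m3 * FR + m1*BPR + m2*BQR)"
      using h1 h2 c FP FQ BPQ by (simp add: algebra_simps power2_eq_square)
    moreover have "D * (l1*x + l2*y + l3*z) = m3 * lr"
      unfolding lr_def using lP lQ c by (simp add: algebra_simps) algebra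
    moreover have "D \<noteq> 0" "lr \<noteq> 0" using D lR unfolding D_def lr_def by auto
    ultimately show ?thesis unfolding M_def m1_def[symmetric] m2_def[symmetric] m3_def[symmetric]
      by (simp add: field_simps power2_eq_square) algebra
  qed
  show ?thesis
  proof (intro exI allI)
    fix x y z
    show "F x y z = (l1*x + l2*y + l3*z) * (M (1,0,0) * x + M (0,1,0) * y + M (0,0,1) * z)"
      unfolding main by (subst Mlin) (rule refl)
  qed
qed

lemma deriv_quad:
  fixes F :: hpoly
  assumes F: "\<And>x y z. F x y z = c1*x^2 + c2*y^2 + c3*z^2 + c4*x*y + c5*x*z + c6*y*z"
  shows "dX F (x,y,z) = 2*c1*x + c4*y + c5*z" "dY F (x,y,z) = 2*c2*y + c4*x + c6*z"
        "dZ F (x,y,z) = 2*c3*z + c5*x + c6*y"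
  unfolding dX_def dY_def dZ_def F
  by (auto intro!: DERIV_imp_deriv derivative_eq_intros simp: algebra_simps)

lemma deriv_G:
  fixes F :: hpoly and a b c :: complex
  assumes F: "\<And>x y z. F x y z = c1*x^2 + c2*y^2 + c3*z^2 + c4*x*y + c5*x*z + c6*y*z"
  defines "G \<equiv> (\<lambda>x y z. (F x y z)^2 + (a*x + b*y + c*z)^3 * z)"
  shows "dX G (x,y,z) = 2*F x y z*(2*c1*x + c4*y + c5*z) + 3*(a*x + b*y + c*z)^2*a*z"
        "dY G (x,y,z) = 2*F x y z*(2*c2*y + c4*x + c6*z) + 3*(a*x + b*y + c*z)^2*b*z"
        "dZ G (x,y,z) = 2*F x y z*(2*c3*z + c5*x + c6*y) + 3*(a*x + b*y + c*z)^2*c*z + (a*x + b*y + c*z)^3"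
  unfolding dX_def dY_def dZ_def G_def F
  by (auto intro!: DERIV_imp_deriv derivative_eq_intros simp: algebra_simps power2_eq_square)

lemma B2_grad:
  fixes F :: hpoly
  assumes F: "\<And>x y z. F x y z = c1*x^2 + c2*y^2 + c3*z^2 + c4*x*y + c5*x*z + c6*y*z"
  shows "B2 F (p1,p2,p3) (q1,q2,q3) = (2*c1*p1 + c4*p2 + c5*p3)*q1 + (2*c2*p2 + c4*p1 + c6*p3)*q2 + (2*c3*p3 + c5*p1 + c6*p2)*q3"
    "(2*c1*p1 + c4*p2 + c5*p3)*p1 + (2*c2*p2 + c4*p1 + c6*p3)*p2 + (2*c3*p3 + c5*p1 + c6*p2)*p3 = 2 * F p1 p2 p3"
  unfolding B2_def F by (simp_all add: algebra_simps power2_eq_square)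

lemma lin2:
  fixes a b p1 p2 q1 q2 :: complex
  assumes "a*p1 + b*p2 = 0" "a*q1 + b*q2 = 0" "a \<noteq> 0 \<or> b \<noteq> 0"
  shows "p1*q2 - p2*q1 = 0"
proof -
  have "a*(p1*q2 - p2*q1) = 0" "b*(p1*q2 - p2*q1) = 0" using assms(1,2) by algebra+
  then show ?thesis using assms(3) by auto
qed

lemma exL:
  fixes a b c p1 p2 p3 :: complex
  assumes "a \<noteq> 0 \<or> b \<noteq> 0"
  shows "\<exists>Q. on_line (a,b,c) Q \<and> \<not> proportional (p1,p2,p3) Q"
proof (cases "proportional (p1,p2,p3) (b,-a,0)")
  case False then show ?thesis by (intro exI[of _ "(b,-a,0)"]) (auto simp: on_line_def algebra_simps)
next
  case True
  then obtain t where t: "(b,-a,0) = (t*p1, t*p2, t*p3)" unfolding proportional_def by auto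
  then have t0: "t \<noteq> 0" using assms by auto
  then have p3: "p3 = 0" using t by auto
  show ?thesis
  proof (cases "a \<noteq> 0")
    case True
    show ?thesis using True p3 by (intro exI[of _ "(-c,0,a)"]) (auto simp: on_line_def proportional_def algebra_simps)
  next
    case False
    then have "b \<noteq> 0" using assms by auto
    then show ?thesis using False p3 by (intro exI[of _ "(0,-c,b)"]) (auto simp: on_line_def proportional_def algebra_simps)
  qed
qed

lemma exLinf:
  fixes p1 p2 p3 :: complex
  shows "\<exists>Q. on_line (0,0,1) Q \<and> \<not> proportional (p1,p2,p3) Q"
proof (cases "p2 \<noteq> 0")
  case True then show ?thesis by (intro exI[of _ "(1,0,0)"]) (auto simp: on_line_def proportional_def)
next
  case False then show ?thesis by (intro exI[of _ "(0,1,0)"]) (auto simp: on_line_def proportional_def)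
qed

lemma det_cnj:
  fixes p1 p2 p3 q1 q2 q3 :: complex
  assumes "\<not> proportional (p1,p2,p3) (q1,q2,q3)" "(p1,p2,p3) \<noteq> (0,0,0)"
  shows "det3 (p1,p2,p3) (q1,q2,q3) (cnj (p2*q3 - p3*q2), cnj (p3*q1 - p1*q3), cnj (p1*q2 - p2*q1)) \<noteq> 0"
proof -
  define w1 where "w1 = p2*q3 - p3*q2"
  define w2 where "w2 = p3*q1 - p1*q3"
  define w3 where "w3 = p1*q2 - p2*q1"
  have nz: "w1 \<noteq> 0 \<or> w2 \<noteq> 0 \<or> w3 \<noteq> 0" using prop_of_cross[OF assms(2)] assms(1) unfolding w1_def w2_def w3_def by blast
  have "det3 (p1,p2,p3) (q1,q2,q3) (cnj w1, cnj w2, cnj w3) = w1 * cnj w1 + w2 * cnj w2 + w3 * cnj w3"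
    unfolding det3_def w1_def w2_def w3_def by (simp add: algebra_simps)
  also have "\<dots> = of_real ((cmod w1)^2 + (cmod w2)^2 + (cmod w3)^2)"
    by (simp only: of_real_add complex_norm_square)
  finally have e: "det3 (p1,p2,p3) (q1,q2,q3) (cnj w1, cnj w2, cnj w3) = of_real ((cmod w1)^2 + (cmod w2)^2 + (cmod w3)^2)" .
  have "(cmod w1)^2 + (cmod w2)^2 + (cmod w3)^2 > 0"
  proof -
    have "(cmod w1)^2 > 0 \<or> (cmod w2)^2 > 0 \<or> (cmod w3)^2 > 0" using nz by auto
    moreover have "(cmod w1)^2 \<ge> 0" "(cmod w2)^2 \<ge> 0" "(cmod w3)^2 \<ge> 0" by auto
    ultimately show ?thesis by linarith
  qed
  then have "complex_of_real ((cmod w1)^2 + (cmod w2)^2 + (cmod w3)^2) \<noteq> 0"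
    by (metis of_real_eq_0_iff less_irrefl)
  then show ?thesis unfolding w1_def[symmetric] w2_def[symmetric] w3_def[symmetric] e .
qed

lemma chartZ:
  fixes G :: hpoly
  assumes hom: "\<And>k x y z. G (k*x) (k*y) (k*z) = k^4 * G x y z"
    and D: "det3 (p1,p2,p3) Q R \<noteq> 0" and p3: "p3 \<noteq> 0"
    and g: "germ_equiv {p. ev G (comb (p1,p2,p3) Q R (fst p) (snd p)) = 0} (0,0) (a_germ n) (0,0)"
  shows "germ_equiv {(x,y). G x y 1 = 0} (p1/p3, p2/p3) (a_germ n) (0,0)"
proof -
  have "germ_equiv {u. ev G ((\<lambda>u. (fst u, snd u, 1)) u) = 0} (p1/p3, p2/p3) (a_germ n) (0,0)"
    by (rule chart[where G=G and P="(p1,p2,p3)" and Q=Q and R=R and lam = "\<lambda>X. snd (snd X)", OF hom D]) (use p3 g in \<open>auto simp: inj_def intro!: continuous_intros\<close>)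
  moreover have "{u. ev G ((\<lambda>u. (fst u, snd u, 1)) u) = 0} = {(x,y). G x y 1 = 0}" by (auto simp: ev_def)
  ultimately show ?thesis by simp
qed

lemma chartX:
  fixes G :: hpoly
  assumes hom: "\<And>k x y z. G (k*x) (k*y) (k*z) = k^4 * G x y z"
    and D: "det3 (p1,p2,p3) Q R \<noteq> 0" and p1: "p1 \<noteq> 0"
    and g: "germ_equiv {p. ev G (comb (p1,p2,p3) Q R (fst p) (snd p)) = 0} (0,0) (a_germ n) (0,0)"
  shows "germ_equiv {(y,z). G 1 y z = 0} (p2/p1, p3/p1) (a_germ n) (0,0)"
proof -
  have "germ_equiv {u. ev G ((\<lambda>u. (1, fst u, snd u)) u) = 0} (p2/p1, p3/p1) (a_germ n) (0,0)"
    by (rule chart[where G=G and P="(p1,p2,p3)" and Q=Q and R=R and lam = "\<lambda>X. fst X", OF hom D]) (use p1 g in \<open>auto simp: inj_def intro!: continuous_intros\<close>)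
  moreover have "{u. ev G ((\<lambda>u. (1, fst u, snd u)) u) = 0} = {(y,z). G 1 y z = 0}" by (auto simp: ev_def)
  ultimately show ?thesis by simp
qed

lemma chartY:
  fixes G :: hpoly
  assumes hom: "\<And>k x y z. G (k*x) (k*y) (k*z) = k^4 * G x y z"
    and D: "det3 (p1,p2,p3) Q R \<noteq> 0" and p2: "p2 \<noteq> 0"
    and g: "germ_equiv {p. ev G (comb (p1,p2,p3) Q R (fst p) (snd p)) = 0} (0,0) (a_germ n) (0,0)"
  shows "germ_equiv {(x,z). G x 1 z = 0} (p1/p2, p3/p2) (a_germ n) (0,0)"
proof -
  have "germ_equiv {u. ev G ((\<lambda>u. (fst u, 1, snd u)) u) = 0} (p1/p2, p3/p2) (a_germ n) (0,0)"
    by (rule chart[where G=G and P="(p1,p2,p3)" and Q=Q and R=R and lam = "\<lambda>X. fst (snd X)", OF hom D]) (use p2 g in \<open>auto simp: inj_def intro!: continuous_intros\<close>)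
  moreover have "{u. ev G ((\<lambda>u. (fst u, 1, snd u)) u) = 0} = {(x,z). G x 1 z = 0}" by (auto simp: ev_def)
  ultimately show ?thesis by simp
qed

lemma homG:
  fixes F :: hpoly and a b c :: complex
  assumes F: "\<And>x y z. F x y z = c1*x^2 + c2*y^2 + c3*z^2 + c4*x*y + c5*x*z + c6*y*z"
  shows "(\<lambda>x y z. (F x y z)^2 + (a*x + b*y + c*z)^3 * z) (k*x) (k*y) (k*z) = k^4 * (\<lambda>x y z. (F x y z)^2 + (a*x + b*y + c*z)^3 * z) x y z"
proof -
  have "F (k*x) (k*y) (k*z) = k^2 * F x y z" unfolding F by (simp add: algebra_simps power2_eq_square)
  then show ?thesis by (simp add: algebra_simps power2_eq_square power3_eq_cube power4_eq_xxxx)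
qed

lemma some_pt:
  assumes "\<exists>Q. PP Q"
  obtains q1 q2 q3 where "(SOME Q. PP Q) = (q1,q2,q3)" "PP (q1,q2,q3)"
proof -
  have "PP (SOME Q. PP Q)" using someI_ex[OF assms] .
  then show ?thesis using that by (cases "SOME Q. PP Q") auto
qed

lemma imult_eq:
  assumes "on_line l (p1,p2,p3)" "(SOME Q. on_line l Q \<and> \<not> proportional (p1,p2,p3) Q) = (q1,q2,q3)"
  shows "imult F l (p1,p2,p3) = vanish_order (\<lambda>s. F (p1 + s*q1) (p2 + s*q2) (p3 + s*q3))"
  using assms by (simp add: imult_def Let_def)

lemma case1:
  fixes F2 :: hpoly and a b c p1 p2 p3 :: complex
  assumes F: "\<And>x y z. F2 x y z = c1*x^2 + c2*y^2 + c3*z^2 + c4*x*y + c5*x*z + c6*y*z"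
    and ab: "a \<noteq> 0 \<or> b \<noteq> 0"
    and Lnc: "\<not> (\<exists>d e f. \<forall>x y z. F2 x y z = (a*x + b*y + c*z) * (d*x + e*y + f*z))"
    and Pnz: "(p1,p2,p3) \<noteq> (0,0,0)"
    and FP: "F2 p1 p2 p3 = 0"
    and grad: "\<not> ((2*c1*p1 + c4*p2 + c5*p3) = 0 \<and> (2*c2*p2 + c4*p1 + c6*p3) = 0 \<and> (2*c3*p3 + c5*p1 + c6*p2) = 0)"
    and onL: "a*p1 + b*p2 + c*p3 = 0"
    and p3: "p3 \<noteq> 0"
  shows "type_a (\<lambda>x y z. (F2 x y z)^2 + (a*x + b*y + c*z)^3 * z) (3 * imult F2 (a,b,c) (p1,p2,p3) - 1) (p1,p2,p3)"
proof -
  define G where "G = (\<lambda>x y z. (F2 x y z)^2 + (a*x + b*y + c*z)^3 * z)"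
  obtain q1 q2 q3 where Qs: "(SOME Q. on_line (a,b,c) Q \<and> \<not> proportional (p1,p2,p3) Q) = (q1,q2,q3)"
    and Qp: "on_line (a,b,c) (q1,q2,q3) \<and> \<not> proportional (p1,p2,p3) (q1,q2,q3)"
    using some_pt[OF exL[OF ab]] by blast
  have qL: "a*q1 + b*q2 + c*q3 = 0" using Qp by (simp add: on_line_def)
  have np: "\<not> proportional (p1,p2,p3) (q1,q2,q3)" using Qp by simp
  define al where "al = F2 q1 q2 q3"
  define be where "be = B2 F2 (p1,p2,p3) (q1,q2,q3)"
  have im: "imult F2 (a,b,c) (p1,p2,p3) = vanish_order (\<lambda>s. F2 (p1 + s*q1) (p2 + s*q2) (p3 + s*q3))"
    by (rule imult_eq[OF _ Qs]) (simp add: on_line_def onL)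
  have fl: "(\<lambda>s. F2 (p1 + s*q1) (p2 + s*q2) (p3 + s*q3)) = (\<lambda>s. al * s^2 + be * s)"
    using quad_line[OF F] FP by (simp add: al_def be_def fun_eq_iff)
  define r1 where "r1 = cnj (p2*q3 - p3*q2)"
  define r2 where "r2 = cnj (p3*q1 - p1*q3)"
  define r3 where "r3 = cnj (p1*q2 - p2*q1)"
  have D: "det3 (p1,p2,p3) (q1,q2,q3) (r1,r2,r3) \<noteq> 0" unfolding r1_def r2_def r3_def by (rule det_cnj[OF np Pnz])
  define lr where "lr = a*r1 + b*r2 + c*r3"
  have lr: "lr \<noteq> 0"
  proof
    assume "lr = 0"
    then have "a = 0 \<and> b = 0 \<and> c = 0" using basis_zero[OF D, of a b c] onL qL unfolding lr_def by auto
    then show False using ab by auto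
  qed
  define ga where "ga = B2 F2 (q1,q2,q3) (r1,r2,r3)"
  define ep where "ep = F2 r1 r2 r3"
  define de where "de = B2 F2 (p1,p2,p3) (r1,r2,r3)"
  define Gl where "Gl p = ev G (comb (p1,p2,p3) (q1,q2,q3) (r1,r2,r3) (fst p) (snd p))" for p
  have Gl: "Gl p = (al*fst p^2 + ga*fst p * snd p + ep * snd p^2 + be*fst p + de * snd p)^2 + lr^3 * snd p^3*(p3 + q3*fst p + r3 * snd p)" for p
  proof -
    define s where "s = fst p"
    define t where "t = snd p"
    have e0: "Gl p = G (p1 + s*q1 + t*r1) (p2 + s*q2 + t*r2) (p3 + s*q3 + t*r3)"
      by (simp add: Gl_def ev_def comb_def s_def t_def)
    have e1: "F2 (p1 + s*q1 + t*r1) (p2 + s*q2 + t*r2) (p3 + s*q3 + t*r3) = al* s^2 + ga* s*t + ep*t^2 + be* s + de*t"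
      using quad_comb[OF F, of p1 s q1 t r1 p2 q2 r2 p3 q3 r3] FP by (simp add: al_def ga_def ep_def be_def de_def)
    have e2: "a*(p1 + s*q1 + t*r1) + b*(p2 + s*q2 + t*r2) + c*(p3 + s*q3 + t*r3) = (a*p1 + b*p2 + c*p3) + s*(a*q1 + b*q2 + c*q3) + t*lr"
      by (simp add: lr_def algebra_simps)
    show ?thesis unfolding e0 G_def e1 e2 onL qL s_def[symmetric] t_def[symmetric]
      by (simp add: algebra_simps power_mult_distrib)
  qed
  define n where "n = (if be \<noteq> 0 then 2 else 5::nat)"
  have g: "germ_equiv {p. Gl p = 0} (0,0) (a_germ n) (0,0)"
  proof (cases "be \<noteq> 0")
    case True
    then show ?thesis unfolding n_def using case1a[OF Gl True] lr p3 by simp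
  next
    case False
    have al: "al \<noteq> 0"
    proof
      assume "al = 0"
      then have "\<exists>d e f. \<forall>x y z. F2 x y z = (a*x + b*y + c*z) * (d*x + e*y + f*z)"
        using factor[OF F D onL qL] lr False FP unfolding lr_def al_def be_def by auto
      then show False using Lnc by blast
    qed
    have de: "de \<noteq> 0"
    proof
      assume "de = 0"
      have "(2*c1*p1 + c4*p2 + c5*p3) = 0 \<and> (2*c2*p2 + c4*p1 + c6*p3) = 0 \<and> (2*c3*p3 + c5*p1 + c6*p2) = 0"
        apply (rule basis_zero[OF D])
        using B2_grad[OF F, of p1 p2 p3] FP False \<open>de = 0\<close> unfolding be_def de_def by (simp_all add: B2_grad[OF F])
      then show False using grad by blast
    qed
    show ?thesis unfolding n_def using case1b[OF Gl _ al de] False lr p3 by simp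
  qed
  have hom: "\<And>k x y z. G (k*x) (k*y) (k*z) = k^4 * G x y z" unfolding G_def by (rule homG[OF F])
  have g2: "germ_equiv {(x,y). G x y 1 = 0} (p1/p3, p2/p3) (a_germ n) (0,0)"
    by (rule chartZ[where G=G, OF hom D p3]) (use g in \<open>simp add: Gl_def\<close>)
  have io: "imult F2 (a,b,c) (p1,p2,p3) = (if be \<noteq> 0 then 1 else 2)"
    unfolding im fl
  proof (rule VO_quad)
    show "al \<noteq> 0 \<or> be \<noteq> 0"
    proof (rule ccontr)
      assume "\<not> (al \<noteq> 0 \<or> be \<noteq> 0)"
      then have "\<exists>d e f. \<forall>x y z. F2 x y z = (a*x + b*y + c*z) * (d*x + e*y + f*z)"
        using factor[OF F D onL qL] lr FP unfolding lr_def al_def be_def by auto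
      then show False using Lnc by blast
    qed
  qed
  have "3 * imult F2 (a,b,c) (p1,p2,p3) - 1 = n" unfolding io n_def by simp
  then show ?thesis using g2 p3 unfolding type_a_def G_def n_def by auto
qed

lemma case3:
  fixes F2 :: hpoly and a b c p1 p2 p3 :: complex
  assumes F: "\<And>x y z. F2 x y z = c1*x^2 + c2*y^2 + c3*z^2 + c4*x*y + c5*x*z + c6*y*z"
    and ab: "a \<noteq> 0 \<or> b \<noteq> 0"
    and Lnc: "\<not> (\<exists>d e f. \<forall>x y z. F2 x y z = (a*x + b*y + c*z) * (d*x + e*y + f*z))"
    and Linc: "\<not> (\<exists>d e f. \<forall>x y z. F2 x y z = z * (d*x + e*y + f*z))"
    and Pnz: "(p1,p2,p3) \<noteq> (0,0,0)"
    and FP: "F2 p1 p2 p3 = 0"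
    and grad: "\<not> ((2*c1*p1 + c4*p2 + c5*p3) = 0 \<and> (2*c2*p2 + c4*p1 + c6*p3) = 0 \<and> (2*c3*p3 + c5*p1 + c6*p2) = 0)"
    and onL: "a*p1 + b*p2 + c*p3 = 0"
    and p3: "p3 = 0"
  shows "type_a (\<lambda>x y z. (F2 x y z)^2 + (a*x + b*y + c*z)^3 * z) (3 * imult F2 (a,b,c) (p1,p2,p3) + imult F2 (0,0,1) (p1,p2,p3) - 1) (p1,p2,p3)"
proof -
  define G where "G = (\<lambda>x y z. (F2 x y z)^2 + (a*x + b*y + c*z)^3 * z)"
  obtain q1 q2 q3 where Qs: "(SOME Q. on_line (a,b,c) Q \<and> \<not> proportional (p1,p2,p3) Q) = (q1,q2,q3)"
    and Qp: "on_line (a,b,c) (q1,q2,q3) \<and> \<not> proportional (p1,p2,p3) (q1,q2,q3)"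
    using some_pt[OF exL[OF ab]] by blast
  obtain r1 r2 r3 where Rs: "(SOME Q. on_line (0,0,1) Q \<and> \<not> proportional (p1,p2,p3) Q) = (r1,r2,r3)"
    and Rp: "on_line (0,0,1) (r1,r2,r3) \<and> \<not> proportional (p1,p2,p3) (r1,r2,r3)"
    using some_pt[OF exLinf] by blast
  have qL: "a*q1 + b*q2 + c*q3 = 0" using Qp by (simp add: on_line_def)
  have npq: "\<not> proportional (p1,p2,p3) (q1,q2,q3)" using Qp by simp
  have r3: "r3 = 0" using Rp by (simp add: on_line_def)
  have npr: "\<not> proportional (p1,p2,p3) (r1,r2,r3)" using Rp by simp
  have q3: "q3 \<noteq> 0"
  proof
    assume "q3 = 0"
    have "p1*q2 - p2*q1 = 0" by (rule lin2[OF _ _ ab]) (use onL qL p3 \<open>q3 = 0\<close> in auto)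
    then have "proportional (p1,p2,p3) (q1,q2,q3)" using prop_of_cross[OF Pnz] p3 \<open>q3 = 0\<close> by simp
    then show False using npq by simp
  qed
  have w: "p1*r2 - p2*r1 \<noteq> 0"
  proof
    assume "p1*r2 - p2*r1 = 0"
    then have "proportional (p1,p2,p3) (r1,r2,r3)" using prop_of_cross[OF Pnz] p3 r3 by simp
    then show False using npr by simp
  qed
  define lr where "lr = a*r1 + b*r2 + c*r3"
  have lr: "lr \<noteq> 0"
  proof
    assume "lr = 0"
    have "p1*r2 - p2*r1 = 0" by (rule lin2[OF _ _ ab]) (use onL \<open>lr = 0\<close> p3 r3 in \<open>auto simp: lr_def\<close>)
    then show False using w by simp
  qed
  have D: "det3 (p1,p2,p3) (q1,q2,q3) (r1,r2,r3) \<noteq> 0"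
  proof -
    have "det3 (p1,p2,p3) (q1,q2,q3) (r1,r2,r3) = - q3 * (p1*r2 - p2*r1)" using p3 r3 by (simp add: det3_def algebra_simps)
    then show ?thesis using q3 w by simp
  qed
  have D': "det3 (p1,p2,p3) (r1,r2,r3) (q1,q2,q3) \<noteq> 0"
  proof -
    have "det3 (p1,p2,p3) (r1,r2,r3) (q1,q2,q3) = q3 * (p1*r2 - p2*r1)" using p3 r3 by (simp add: det3_def algebra_simps)
    then show ?thesis using q3 w by simp
  qed
  define al where "al = F2 q1 q2 q3"
  define be where "be = B2 F2 (p1,p2,p3) (q1,q2,q3)"
  define ga where "ga = B2 F2 (q1,q2,q3) (r1,r2,r3)"
  define ep where "ep = F2 r1 r2 r3"
  define de where "de = B2 F2 (p1,p2,p3) (r1,r2,r3)"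
  have im1: "imult F2 (a,b,c) (p1,p2,p3) = vanish_order (\<lambda>s. al * s^2 + be * s)"
  proof -
    have "imult F2 (a,b,c) (p1,p2,p3) = vanish_order (\<lambda>s. F2 (p1 + s*q1) (p2 + s*q2) (p3 + s*q3))"
      by (rule imult_eq[OF _ Qs]) (simp add: on_line_def onL)
    moreover have "(\<lambda>s. F2 (p1 + s*q1) (p2 + s*q2) (p3 + s*q3)) = (\<lambda>s. al * s^2 + be * s)"
      using quad_line[OF F] FP by (simp add: al_def be_def fun_eq_iff)
    ultimately show ?thesis by simp
  qed
  have im2: "imult F2 (0,0,1) (p1,p2,p3) = vanish_order (\<lambda>s. ep * s^2 + de * s)"
  proof -
    have "imult F2 (0,0,1) (p1,p2,p3) = vanish_order (\<lambda>s. F2 (p1 + s*r1) (p2 + s*r2) (p3 + s*r3))"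
      by (rule imult_eq[OF _ Rs]) (simp add: on_line_def p3)
    moreover have "(\<lambda>s. F2 (p1 + s*r1) (p2 + s*r2) (p3 + s*r3)) = (\<lambda>s. ep * s^2 + de * s)"
      using quad_line[OF F] FP by (simp add: ep_def de_def fun_eq_iff)
    ultimately show ?thesis by simp
  qed
  have alnz: "al \<noteq> 0" if "be = 0"
  proof
    assume "al = 0"
    then have "\<exists>d e f. \<forall>x y z. F2 x y z = (a*x + b*y + c*z) * (d*x + e*y + f*z)"
      using factor[OF F D onL qL] lr that FP unfolding lr_def al_def be_def by auto
    then show False using Lnc by blast
  qed
  have epnz: "ep \<noteq> 0" if "de = 0"
  proof
    assume "ep = 0"
    have "\<exists>d e f. \<forall>x y z. F2 x y z = (0*x + 0*y + 1*z) * (d*x + e*y + f*z)"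
      by (rule factor[OF F D']) (use p3 r3 q3 that FP \<open>ep = 0\<close> in \<open>auto simp: ep_def de_def\<close>)
    then show False using Linc by simp
  qed
  have denz: "de \<noteq> 0" if "be = 0"
  proof
    assume "de = 0"
    have "(2*c1*p1 + c4*p2 + c5*p3) = 0 \<and> (2*c2*p2 + c4*p1 + c6*p3) = 0 \<and> (2*c3*p3 + c5*p1 + c6*p2) = 0"
      apply (rule basis_zero[OF D])
      using B2_grad[OF F, of p1 p2 p3] FP that \<open>de = 0\<close> unfolding be_def de_def by (simp_all add: B2_grad[OF F])
    then show False using grad by blast
  qed
  have i1: "imult F2 (a,b,c) (p1,p2,p3) = (if be \<noteq> 0 then 1 else 2)"
    unfolding im1 by (rule VO_quad) (use alnz in blast)
  have i2: "imult F2 (0,0,1) (p1,p2,p3) = (if de \<noteq> 0 then 1 else 2)"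
    unfolding im2 by (rule VO_quad) (use epnz in blast)
  define Gl where "Gl p = ev G (comb (p1,p2,p3) (q1,q2,q3) (r1,r2,r3) (fst p) (snd p))" for p
  have Gl: "Gl p = (al*fst p^2 + ga*fst p * snd p + ep * snd p^2 + be*fst p + de * snd p)^2 + (lr^3 * q3) * fst p * snd p^3" for p
  proof -
    define s where "s = fst p"
    define t where "t = snd p"
    have e0: "Gl p = G (p1 + s*q1 + t*r1) (p2 + s*q2 + t*r2) (p3 + s*q3 + t*r3)"
      by (simp add: Gl_def ev_def comb_def s_def t_def)
    have e1: "F2 (p1 + s*q1 + t*r1) (p2 + s*q2 + t*r2) (p3 + s*q3 + t*r3) = al* s^2 + ga* s*t + ep*t^2 + be* s + de*t"
      using quad_comb[OF F, of p1 s q1 t r1 p2 q2 r2 p3 q3 r3] FP by (simp add: al_def ga_def ep_def be_def de_def)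
    have e2: "a*(p1 + s*q1 + t*r1) + b*(p2 + s*q2 + t*r2) + c*(p3 + s*q3 + t*r3) = (a*p1 + b*p2 + c*p3) + s*(a*q1 + b*q2 + c*q3) + t*lr"
      by (simp add: lr_def algebra_simps)
    show ?thesis unfolding e0 G_def e1 e2 onL qL s_def[symmetric] t_def[symmetric]
      using p3 r3 by (simp add: algebra_simps power_mult_distrib)
  qed
  define n where "n = (if be \<noteq> 0 then (if de \<noteq> 0 then 3 else 4) else 6::nat)"
  have ka: "lr^3 * q3 \<noteq> 0" using lr q3 by simp
  have g: "germ_equiv {p. Gl p = 0} (0,0) (a_germ n) (0,0)"
  proof (cases "be \<noteq> 0")
    case True
    show ?thesis
    proof (cases "de \<noteq> 0")
      case True
      then show ?thesis unfolding n_def using case3a[OF Gl \<open>be \<noteq> 0\<close> True ka] \<open>be \<noteq> 0\<close> by simp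
    next
      case False
      then show ?thesis unfolding n_def using case3b[OF Gl _ \<open>be \<noteq> 0\<close> epnz ka] \<open>be \<noteq> 0\<close> by simp
    qed
  next
    case False
    then show ?thesis unfolding n_def using case3c[OF Gl _ alnz denz ka] by simp
  qed
  have hom: "\<And>k x y z. G (k*x) (k*y) (k*z) = k^4 * G x y z" unfolding G_def by (rule homG[OF F])
  have nn: "3 * imult F2 (a,b,c) (p1,p2,p3) + imult F2 (0,0,1) (p1,p2,p3) - 1 = n"
    unfolding i1 i2 n_def using denz by auto
  show ?thesis
  proof (cases "p1 \<noteq> 0")
    case True
    have "germ_equiv {(y,z). G 1 y z = 0} (p2/p1, p3/p1) (a_germ n) (0,0)"
      by (rule chartX[where G=G, OF hom D True]) (use g in \<open>simp add: Gl_def\<close>)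
    then show ?thesis using True unfolding type_a_def nn G_def n_def by auto
  next
    case False
    then have p2: "p2 \<noteq> 0" using Pnz p3 by auto
    have "germ_equiv {(x,z). G x 1 z = 0} (p1/p2, p3/p2) (a_germ n) (0,0)"
      by (rule chartY[where G=G, OF hom D p2]) (use g in \<open>simp add: Gl_def\<close>)
    then show ?thesis using p2 unfolding type_a_def nn G_def n_def by auto
  qed
qed

lemma case2:
  fixes F2 :: hpoly and a b c p1 p2 p3 :: complex
  assumes F: "\<And>x y z. F2 x y z = c1*x^2 + c2*y^2 + c3*z^2 + c4*x*y + c5*x*z + c6*y*z"
    and Linc: "\<not> (\<exists>d e f. \<forall>x y z. F2 x y z = z * (d*x + e*y + f*z))"
    and Pnz: "(p1,p2,p3) \<noteq> (0,0,0)"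
    and FP: "F2 p1 p2 p3 = 0"
    and notL: "a*p1 + b*p2 + c*p3 \<noteq> 0"
    and p3: "p3 = 0"
  shows "smooth_at (\<lambda>x y z. (F2 x y z)^2 + (a*x + b*y + c*z)^3 * z) (p1,p2,p3) \<and>
         dX (\<lambda>x y z. (F2 x y z)^2 + (a*x + b*y + c*z)^3 * z) (p1,p2,p3) = 0 \<and>
         dY (\<lambda>x y z. (F2 x y z)^2 + (a*x + b*y + c*z)^3 * z) (p1,p2,p3) = 0 \<and>
         imult (\<lambda>x y z. (F2 x y z)^2 + (a*x + b*y + c*z)^3 * z) (0,0,1) (p1,p2,p3) = 2 * imult F2 (0,0,1) (p1,p2,p3)"
proof -
  note dG = deriv_G[OF F, of a b c p1 p2 p3]
  obtain r1 r2 r3 where Rs: "(SOME Q. on_line (0,0,1) Q \<and> \<not> proportional (p1,p2,p3) Q) = (r1,r2,r3)"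
    and Rp: "on_line (0,0,1) (r1,r2,r3) \<and> \<not> proportional (p1,p2,p3) (r1,r2,r3)"
    using some_pt[OF exLinf] by blast
  have r3: "r3 = 0" using Rp by (simp add: on_line_def)
  have npr: "\<not> proportional (p1,p2,p3) (r1,r2,r3)" using Rp by simp
  have w: "p1*r2 - p2*r1 \<noteq> 0"
  proof
    assume "p1*r2 - p2*r1 = 0"
    then have "proportional (p1,p2,p3) (r1,r2,r3)" using prop_of_cross[OF Pnz] p3 r3 by simp
    then show False using npr by simp
  qed
  have D: "det3 (p1,p2,p3) (r1,r2,r3) (0,0,1) \<noteq> 0" using w p3 r3 by (simp add: det3_def)
  define ep where "ep = F2 r1 r2 r3"
  define de where "de = B2 F2 (p1,p2,p3) (r1,r2,r3)"
  have nz: "ep \<noteq> 0 \<or> de \<noteq> 0"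
  proof (rule ccontr)
    assume "\<not> (ep \<noteq> 0 \<or> de \<noteq> 0)"
    then have "\<exists>d e f. \<forall>x y z. F2 x y z = (0*x + 0*y + 1*z) * (d*x + e*y + f*z)"
      by (intro factor[OF F D]) (use p3 r3 FP in \<open>auto simp: ep_def de_def\<close>)
    then show False using Linc by simp
  qed
  have fl: "(\<lambda>s. F2 (p1 + s*r1) (p2 + s*r2) (p3 + s*r3)) = (\<lambda>s. ep * s^2 + de * s)"
    using quad_line[OF F] FP by (simp add: ep_def de_def fun_eq_iff)
  have i2: "imult F2 (0,0,1) (p1,p2,p3) = (if de \<noteq> 0 then 1 else 2)"
  proof -
    have "imult F2 (0,0,1) (p1,p2,p3) = vanish_order (\<lambda>s. F2 (p1 + s*r1) (p2 + s*r2) (p3 + s*r3))"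
      by (rule imult_eq[OF _ Rs]) (simp add: on_line_def p3)
    then show ?thesis unfolding fl using VO_quad[OF nz] by simp
  qed
  have iG: "imult (\<lambda>x y z. (F2 x y z)^2 + (a*x + b*y + c*z)^3 * z) (0,0,1) (p1,p2,p3) = (if de \<noteq> 0 then 2 else 4)"
  proof -
    have "imult (\<lambda>x y z. (F2 x y z)^2 + (a*x + b*y + c*z)^3 * z) (0,0,1) (p1,p2,p3) =
       vanish_order (\<lambda>s. (F2 (p1 + s*r1) (p2 + s*r2) (p3 + s*r3))^2 + (a*(p1 + s*r1) + b*(p2 + s*r2) + c*(p3 + s*r3))^3 * (p3 + s*r3))"
      by (rule imult_eq[OF _ Rs]) (simp add: on_line_def p3)
    also have "(\<lambda>s. (F2 (p1 + s*r1) (p2 + s*r2) (p3 + s*r3))^2 + (a*(p1 + s*r1) + b*(p2 + s*r2) + c*(p3 + s*r3))^3 * (p3 + s*r3))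
        = (\<lambda>s. (ep * s^2 + de * s)^2)"
      using fun_cong[OF fl] p3 r3 by (simp add: fun_eq_iff)
    finally show ?thesis using VO_quad_sq[OF nz] by simp
  qed
  show ?thesis
    using dG FP p3 notL i2 iG by (auto simp: smooth_at_def ev_def)
qed

theorem lemma1:
  fixes a b c :: complex and F2 :: hpoly and P :: pt
  assumes F2_quad: "\<exists>c1 c2 c3 c4 c5 c6. \<forall>x y z. F2 x y z = c1*x^2 + c2*y^2 + c3*z^2 + c4*x*y + c5*x*z + c6*y*z"
    and L_ne_Linf: "a \<noteq> 0 \<or> b \<noteq> 0"
    and F2_nonzero: "\<exists>x y z. F2 x y z \<noteq> 0"
    and L_not_comp: "\<not> (\<exists>d e f. \<forall>x y z. F2 x y z = (a*x + b*y + c*z) * (d*x + e*y + f*z))"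
    and Linf_not_comp: "\<not> (\<exists>d e f. \<forall>x y z. F2 x y z = z * (d*x + e*y + f*z))"
    and P_nonzero: "P \<noteq> (0, 0, 0)"
    and smooth: "smooth_at F2 P"
  shows
   "(let F1 = (\<lambda>x y z. a*x + b*y + c*z);
         G = (\<lambda>x y z. (F2 x y z)^2 + (F1 x y z)^3 * z);
         L = (a, b, c); Linf = (0, 0, 1);
         \<iota>1 = imult F2 L P; \<iota>2 = imult F2 Linf P in
     (on_line L P \<and> \<not> on_line Linf P \<longrightarrow> type_a G (3*\<iota>1 - 1) P) \<and>
     (on_line Linf P \<and> \<not> on_line L P \<longrightarrow>
        smooth_at G P \<and> dX G P = 0 \<and> dY G P = 0 \<and> imult G Linf P = 2*\<iota>2) \<and>
     (on_line L P \<and> on_line Linf P \<longrightarrow> type_a G (3*\<iota>1 + \<iota>2 - 1) P))"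
proof -
  obtain c1 c2 c3 c4 c5 c6 where F: "\<And>x y z. F2 x y z = c1*x^2 + c2*y^2 + c3*z^2 + c4*x*y + c5*x*z + c6*y*z"
    using F2_quad by blast
  obtain p1 p2 p3 where P: "P = (p1,p2,p3)" by (cases P) auto
  have Pnz: "(p1,p2,p3) \<noteq> (0,0,0)" using P_nonzero P by simp
  have FP: "F2 p1 p2 p3 = 0" using smooth P by (simp add: smooth_at_def ev_def)
  have grad: "\<not> ((2*c1*p1 + c4*p2 + c5*p3) = 0 \<and> (2*c2*p2 + c4*p1 + c6*p3) = 0 \<and> (2*c3*p3 + c5*p1 + c6*p2) = 0)"
    using smooth P deriv_quad[OF F, of p1 p2 p3] by (simp add: smooth_at_def)
  show ?thesis unfolding Let_def P
  proof (intro conjI impI)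
    assume h: "on_line (a, b, c) (p1, p2, p3) \<and> \<not> on_line (0, 0, 1) (p1, p2, p3)"
    show "type_a (\<lambda>x y z. (F2 x y z)\<^sup>2 + (a * x + b * y + c * z) ^ 3 * z) (3 * imult F2 (a, b, c) (p1, p2, p3) - 1) (p1, p2, p3)"
      by (rule case1[OF F L_ne_Linf L_not_comp Pnz FP grad]) (use h in \<open>auto simp: on_line_def\<close>)
  next
    assume h: "on_line (0, 0, 1) (p1, p2, p3) \<and> \<not> on_line (a, b, c) (p1, p2, p3)"
    have "p3 = 0" "a*p1 + b*p2 + c*p3 \<noteq> 0" using h by (auto simp: on_line_def)
    note r = case2[OF F Linf_not_comp Pnz FP this(2,1)]
    show "smooth_at (\<lambda>x y z. (F2 x y z)\<^sup>2 + (a * x + b * y + c * z) ^ 3 * z) (p1, p2, p3)" using r by blast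
    show "dX (\<lambda>x y z. (F2 x y z)\<^sup>2 + (a * x + b * y + c * z) ^ 3 * z) (p1, p2, p3) = 0" using r by blast
    show "dY (\<lambda>x y z. (F2 x y z)\<^sup>2 + (a * x + b * y + c * z) ^ 3 * z) (p1, p2, p3) = 0" using r by blast
    show "imult (\<lambda>x y z. (F2 x y z)\<^sup>2 + (a * x + b * y + c * z) ^ 3 * z) (0, 0, 1) (p1, p2, p3) = 2 * imult F2 (0, 0, 1) (p1, p2, p3)" using r by blast
  next
    assume h: "on_line (a, b, c) (p1, p2, p3) \<and> on_line (0, 0, 1) (p1, p2, p3)"
    show "type_a (\<lambda>x y z. (F2 x y z)\<^sup>2 + (a * x + b * y + c * z) ^ 3 * z)
     (3 * imult F2 (a, b, c) (p1, p2, p3) + imult F2 (0, 0, 1) (p1, p2, p3) - 1) (p1, p2, p3)"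
      by (rule case3[OF F L_ne_Linf L_not_comp Linf_not_comp Pnz FP grad]) (use h in \<open>auto simp: on_line_def\<close>)
  qed
qed

end
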